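(* Let $k\geq 2$ be an integer, $n=rk$ with $r>2$ an integer, and $e=\lceil r/2\rceil-1$. Let $\mathcal{C}_i=\{\alpha U_i\mid \alpha\in\mathbb{F}_{q^n}^*\}$. Then the subspace code $\mathcal{C}=\bigcup_{i=1}^{e(q-1)(q^k-1)}\mathcal{C}_i$ is a cyclic constant dimension subspace code with cardinality $e(q^k-1)(q^n-1)$ and minimum distance $2k-2$.
   Context: $q$ is a prime power, $\mathbb{F}_{q^n}$ is the extension of degree $n$ of $\mathbb{F}_q$, viewed as an $n$-dimensional $\mathbb{F}_q$-vector space. The subspace distance is $d(U,V)=\dim U+\dim V-2\dim(U\cap V)$; a constant dimension subspace code is a set of $k$-dimensional $\mathbb{F}_q$-subspaces of $\mathbb{F}_{q^n}$, and it is cyclic if it is a union of orbits $\{\alpha U\mid \alpha\in\mathbb{F}_{q^n}^*\}$. Let $\xi$ be a primitive element of $\mathbb{F}_{q^k}$ and $G=\mathbb{F}_{q^k}^*/\langle\xi^{q-1}\rangle$, a cyclic group of order $q-1$ (elements of $G$ are used via fixed coset representatives in $\mathbb{F}_{q^k}^*$). Let $\gamma$ be a root of an irreducible polynomial of degree $r$ over $\mathbb{F}_{q^k}$ (so $1,\gamma,\dots,\gamma^{r-1}$ are linearly independent over $\mathbb{F}_{q^k}$ and $\mathbb{F}_{q^k}(\gamma)=\mathbb{F}_{q^n}$). The $e(q-1)(q^k-1)$ subspaces $U_i=\{u+(\tau_i u^q+u)\delta_i\gamma^{l_i}\mid u\in\mathbb{F}_{q^k}\}$, $1\le i\le e(q-1)(q^k-1)$,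 are indexed by all triples $(\tau_i,\delta_i,l_i)$ with $\tau_i\in G$, $\delta_i\in\mathbb{F}_{q^k}^*$, $1\leq l_i\leq e$. *)

theory Defs
  imports "HOL-Computational_Algebra.Polynomial"
begin

text \<open>The subfield of order q^m of a finite field (as the set of roots of x^(q^m) - x).
  In particular subfld q 1 is F_q and subfld q k is F_(q^k).\<close>
definition subfld :: "nat \<Rightarrow> nat \<Rightarrow> 'a::field set" where
  "subfld q m = {x. x ^ (q ^ m) = x}"

definition fq_span :: "nat \<Rightarrow> 'a::field set \<Rightarrow> 'a set" where
  "fq_span q B = {(\<Sum>b\<in>B. c b * b) | c. \<forall>b\<in>B. c b \<in> subfld q 1}"

definition fq_indep :: "nat \<Rightarrow> 'a::field set \<Rightarrow> bool" where
  "fq_indep q B = (\<forall>c. (\<forall>b\<in>B. c b \<in> subfld q 1) \<and> (\<Sum>b\<in>B. c b * b) = 0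
                       \<longrightarrow> (\<forall>b\<in>B. c b = 0))"

definition fq_subspace :: "nat \<Rightarrow> 'a::field set \<Rightarrow> bool" where
  "fq_subspace q U = (0 \<in> U \<and> (\<forall>x\<in>U. \<forall>y\<in>U. x + y \<in> U)
                       \<and> (\<forall>c\<in>subfld q 1. \<forall>x\<in>U. c * x \<in> U))"

definition fq_dim :: "nat \<Rightarrow> 'a::field set \<Rightarrow> nat" where
  "fq_dim q U = (SOME d. \<exists>B. B \<subseteq> U \<and> finite B \<and> card B = d \<and> fq_indep q B \<and> fq_span q B = U)"

definition subspace_dist :: "nat \<Rightarrow> 'a::field set \<Rightarrow> 'a set \<Rightarrow> int" where
  "subspace_dist q U V = int (fq_dim q U) + int (fq_dim q V) - 2 * int (fq_dim q (U \<inter> V))"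

definition orbit :: "'a::field set \<Rightarrow> 'a set set" where
  "orbit U = {(\<lambda>x. \<alpha> * x) ` U | \<alpha>. \<alpha> \<noteq> 0}"

definition poly_over :: "'a::field set \<Rightarrow> 'a poly \<Rightarrow> bool" where
  "poly_over S f = (\<forall>i. coeff f i \<in> S)"

definition irreducible_over :: "'a::field set \<Rightarrow> 'a poly \<Rightarrow> bool" where
  "irreducible_over S f = (poly_over S f \<and> degree f > 0 \<and>
     (\<forall>g h. poly_over S g \<and> poly_over S h \<and> f = g * h \<longrightarrow> degree g = 0 \<or> degree h = 0))"

definition U_sub :: "nat \<Rightarrow> nat \<Rightarrow> 'a::field \<Rightarrow> 'a \<Rightarrow> 'a \<Rightarrow> nat \<Rightarrow> 'a set" where
  "U_sub q k \<gamma> \<tau> \<delta> l = {u + (\<tau> * u ^ q + u) * \<delta> * \<gamma> ^ l | u. u \<in> subfld q k}"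

end

theory Submission
  imports Defs "HOL-Number_Theory.Cong" "HOL-Library.FuncSet"
begin

lemma CHAR_dvd_card: "CHAR('a::{field,finite}) dvd card (UNIV :: 'a set)"
proof -
  define l where "l = CHAR('a)"
  have l0: "l > 0" unfolding l_def using finite_imp_CHAR_pos[where ?'a='a] by auto
  define R where "R = {(x::'a, y). \<exists>i. y = x + of_nat i}"
  have eq: "equiv UNIV R"
  proof (rule equivI)
    show "refl R" unfolding R_def refl_on_def by (auto intro: exI[of _ 0])
    show "sym R" unfolding R_def sym_def
    proof (clarify)
      fix x :: 'a and i
      have "x = x + of_nat i + of_nat ((l - 1) * i)"
      proof -
        have "of_nat i + of_nat ((l - 1) * i) = (of_nat (l * i) :: 'a)"
          using l0 by (simp flip: of_nat_add) (simp add: algebra_simps diff_mult_distrib)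
        also have "\<dots> = 0" by (simp add: l_def)
        finally show ?thesis by (simp add: add.assoc)
      qed
      thus "\<exists>j. x = x + of_nat i + of_nat j" by blast
    qed
    show "trans R" unfolding R_def trans_def
      by clarify (metis add.assoc of_nat_add)
  qed auto
  have "l dvd card X" if "X \<in> UNIV // R" for X
  proof -
    obtain x where X: "X = R `` {x}" using \<open>X \<in> UNIV // R\<close> by (auto elim: quotientE)
    have "X = (\<lambda>i. x + of_nat i) ` {..<l}"
    proof
      show "X \<subseteq> (\<lambda>i. x + of_nat i) ` {..<l}"
      proof
        fix y assume "y \<in> X"
        then obtain i where "y = x + of_nat i" using X R_def by auto
        moreover have "(of_nat i :: 'a) = of_nat (i mod l)"
          by (simp add: of_nat_eq_iff_cong_CHAR l_def cong_def)
        moreover have "i mod l < l" using l0 by simp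
        ultimately show "y \<in> (\<lambda>i. x + of_nat i) ` {..<l}" by auto
      qed
      show "(\<lambda>i. x + of_nat i) ` {..<l} \<subseteq> X" using X R_def by auto
    qed
    moreover have "inj_on (\<lambda>i. x + (of_nat i :: 'a)) {..<l}"
      by (intro inj_onI) (auto simp: of_nat_eq_iff_cong_CHAR cong_def l_def)
    ultimately show ?thesis by (simp add: card_image)
  qed
  thus ?thesis unfolding l_def[symmetric] using equiv_imp_dvd_card[OF _ eq] by auto
qed

lemma char_eq:
  assumes "prime p" "card (UNIV :: 'a::{field,finite} set) = p ^ N" "N > 0"
  shows "CHAR('a) = p"
proof -
  have pc: "prime CHAR('a)"
    using prime_CHAR_semidom[where ?'a='a] finite_imp_CHAR_pos[where ?'a='a] by auto
  have "CHAR('a) dvd p ^ N" using CHAR_dvd_card[where ?'a='a] assms by simp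
  hence "CHAR('a) dvd p" using pc prime_dvd_power by blast
  thus ?thesis using pc assms(1) primes_dvd_imp_eq by blast
qed

lemma roots_bound:
  fixes c d :: "'a::field"
  assumes "c \<noteq> 0" "N \<ge> 2"
  shows "card {x. c * x ^ N + d * x = 0} \<le> N"
proof -
  define P where "P = Polynomial.monom c N + Polynomial.monom d 1"
  have cN: "coeff P N = c" using assms by (simp add: P_def coeff_monom)
  hence "P \<noteq> 0" using assms by auto
  have dg: "degree P \<le> N" unfolding P_def using assms
    by (intro degree_add_le) (auto simp: degree_monom_le intro: order.trans[OF degree_monom_le])
  have "{x. c * x ^ N + d * x = 0} = {x. poly P x = 0}"
    by (simp add: P_def poly_monom)
  also have "card \<dots> \<le> degree P" by (rule card_poly_roots_bound[OF \<open>P \<noteq> 0\<close>])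
  finally show ?thesis using dg by simp
qed

lemma dvd_pow_minus_one: "(q::nat) \<ge> 1 \<Longrightarrow> q - 1 dvd q ^ k - 1"
proof (induction k)
  case (Suc k)
  have "q ^ Suc k - 1 = q * (q ^ k - 1) + (q - 1)"
  proof -
    have "q ^ k \<ge> 1" using Suc.prems by simp
    then show ?thesis using Suc.prems by (simp add: diff_mult_distrib2)
  qed
  moreover have "q - 1 dvd q * (q ^ k - 1) + (q - 1)"
    using Suc.IH Suc.prems by (intro dvd_add dvd_mult) auto
  ultimately show ?case by simp
qed simp

locale L =
  fixes q k r n e p m :: nat and \<xi> \<gamma> :: "'a::{field,finite}" and T :: "'a set"
  assumes p: "prime p" and m: "m > 0" and qdef: "q = p ^ m"
    and k2: "k \<ge> 2" and r2: "r > 2" and n_def: "n = r * k"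
    and card_F: "card (UNIV :: 'a set) = q ^ n"
    and e_def: "e = nat \<lceil>real r / 2\<rceil> - 1"
    and xi_K: "\<xi> \<in> subfld q k" and xi0: "\<xi> \<noteq> 0"
    and xi_ord: "\<forall>j. 0 < j \<and> j < q ^ k - 1 \<longrightarrow> \<xi> ^ j \<noteq> 1"
    and T_sub: "T \<subseteq> subfld q k - {0}"
    and T_rep: "\<forall>x \<in> subfld q k - {0}. \<exists>!\<tau>. \<tau> \<in> T \<and> (\<exists>j::nat. x = \<tau> * (\<xi> ^ (q - 1)) ^ j)"
    and gamma: "\<exists>f. irreducible_over (subfld q k) f \<and> degree f = r \<and> poly f \<gamma> = 0"
begin

abbreviation K :: "'a set" where "K \<equiv> subfld q k"
abbreviation Fq :: "'a set" where "Fq \<equiv> subfld q 1"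
abbreviation Q :: nat where "Q \<equiv> q ^ k"

lemma n_pos: "n > 0" using n_def r2 k2 by simp

lemma CHAR_p: "CHAR('a) = p"
  using char_eq[OF p, of "m * n"] card_F qdef n_pos m by (simp add: power_mult)

lemma p2: "p \<ge> 2" using p prime_ge_2_nat by blast

lemma q2: "q \<ge> 2"
proof -
  have "p ^ 1 \<le> p ^ m" using m p2 by (intro power_increasing) auto
  thus ?thesis using p2 qdef by simp
qed

lemma qpos: "q > 0" using q2 by simp

lemma Q_ge: "Q \<ge> q * q"
proof -
  have "q ^ 2 \<le> q ^ k" using k2 q2 by (intro power_increasing) auto
  thus ?thesis by (simp add: power2_eq_square)
qed

lemma Q_gt_q: "Q > q"
proof -
  have "2 * q \<le> q * q" using q2 by simp
  thus ?thesis using Q_ge qpos by linarith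
qed

lemma frob_add: "(x + y :: 'a) ^ (q ^ j) = x ^ (q ^ j) + y ^ (q ^ j)"
proof -
  have "q ^ j = CHAR('a) ^ (m * j)" using CHAR_p qdef by (simp add: power_mult)
  thus ?thesis using freshmans_dream'[of "q ^ j" "m * j" x y] CHAR_p p by simp
qed

lemma frob_sum: "(sum f A :: 'a) ^ (q ^ j) = (\<Sum>i\<in>A. f i ^ (q ^ j))"
proof -
  have "q ^ j = CHAR('a) ^ (m * j)" using CHAR_p qdef by (simp add: power_mult)
  thus ?thesis using freshmans_dream_sum'[of "q ^ j" "m * j" f A] CHAR_p p by simp
qed

lemma frob_neg: "(- x :: 'a) ^ (q ^ j) = - (x ^ (q ^ j))"
proof -
  have "(x + - x) ^ (q ^ j) = x ^ (q ^ j) + (- x) ^ (q ^ j)" by (rule frob_add)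
  moreover have "(0::'a) ^ (q ^ j) = 0" using qpos by simp
  ultimately show ?thesis by (simp add: eq_neg_iff_add_eq_0 add.commute)
qed

lemma frob_diff: "(x - y :: 'a) ^ (q ^ j) = x ^ (q ^ j) - y ^ (q ^ j)"
  using frob_add[of x "- y" j] frob_neg[of y j] by simp

lemma frob_add1: "(x + y :: 'a) ^ q = x ^ q + y ^ q" using frob_add[of x y 1] by simp
lemma frob_diff1: "(x - y :: 'a) ^ q = x ^ q - y ^ q" using frob_diff[of x y 1] by simp
lemma frob_neg1: "(- x :: 'a) ^ q = - (x ^ q)" using frob_neg[of x 1] by simp

lemma sf_iff: "(x::'a) \<in> subfld q j \<longleftrightarrow> x ^ (q ^ j) = x" by (simp add: subfld_def)

lemma sf_0: "(0::'a) \<in> subfld q j" using qpos by (simp add: subfld_def)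
lemma sf_1: "(1::'a) \<in> subfld q j" by (simp add: subfld_def)
lemma sf_add: "(x::'a) \<in> subfld q j \<Longrightarrow> y \<in> subfld q j \<Longrightarrow> x + y \<in> subfld q j"
  by (simp add: subfld_def frob_add)
lemma sf_neg: "(x::'a) \<in> subfld q j \<Longrightarrow> - x \<in> subfld q j"
  by (simp add: subfld_def frob_neg)
lemma sf_diff: "(x::'a) \<in> subfld q j \<Longrightarrow> y \<in> subfld q j \<Longrightarrow> x - y \<in> subfld q j"
  by (simp add: subfld_def frob_diff)
lemma sf_mult: "(x::'a) \<in> subfld q j \<Longrightarrow> y \<in> subfld q j \<Longrightarrow> x * y \<in> subfld q j"
  by (simp add: subfld_def power_mult_distrib)
lemma sf_inv: "(x::'a) \<in> subfld q j \<Longrightarrow> inverse x \<in> subfld q j"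
  by (simp add: subfld_def power_inverse)
lemma sf_div: "(x::'a) \<in> subfld q j \<Longrightarrow> y \<in> subfld q j \<Longrightarrow> x / y \<in> subfld q j"
  by (simp add: divide_inverse sf_mult sf_inv)
lemma sf_pow: "(x::'a) \<in> subfld q j \<Longrightarrow> x ^ i \<in> subfld q j"
  by (induction i) (auto simp: sf_1 sf_mult)
lemma sf_sum: "(\<And>i. i \<in> A \<Longrightarrow> f i \<in> subfld q j) \<Longrightarrow> (sum f A :: 'a) \<in> subfld q j"
  by (simp add: subfld_def frob_sum)

lemma Fq_sub_K_gen: "x ^ q = x \<Longrightarrow> x ^ (q ^ j) = (x::'a)"
proof (induction j)
  case (Suc j)
  have "x ^ (q ^ Suc j) = (x ^ (q ^ j)) ^ q" by (simp only: power_Suc power_mult[symmetric] mult.commute)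
  thus ?case using Suc by simp
qed simp

lemma Fq_sub_K: "Fq \<subseteq> K" using Fq_sub_K_gen by (auto simp: subfld_def)

lemma card_sf_le: "card (subfld q j :: 'a set) \<le> q ^ j" if "j > 0"
proof -
  have "q ^ j \<ge> q ^ 1" using that q2 by (intro power_increasing) auto
  hence N2: "q ^ j \<ge> 2" using q2 by simp
  have "(subfld q j :: 'a set) = {x. 1 * x ^ (q ^ j) + (-1) * x = 0}" by (auto simp: subfld_def)
  thus ?thesis using roots_bound[of "1::'a" "q ^ j" "-1"] N2 by simp
qed

lemma xi_Q: "\<xi> ^ (Q - 1) = 1"
proof -
  have "\<xi> ^ Q = \<xi>" using xi_K by (simp add: subfld_def)
  moreover have "\<xi> ^ Q = \<xi> * \<xi> ^ (Q - 1)" using qpos by (simp flip: power_Suc)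
  ultimately show ?thesis using xi0 by simp
qed

lemma xi_pow_inj: "i < Q - 1 \<Longrightarrow> j < Q - 1 \<Longrightarrow> \<xi> ^ i = \<xi> ^ j \<Longrightarrow> i = j"
proof (induction i j rule: linorder_wlog)
  case (le i j)
  show ?case
  proof (rule ccontr)
    assume "i \<noteq> j"
    hence "0 < j - i" "j - i < Q - 1" using le by auto
    hence "\<xi> ^ (j - i) \<noteq> 1" using xi_ord by blast
    moreover have "\<xi> ^ j = \<xi> ^ i * \<xi> ^ (j - i)"
    proof -
      have "j = i + (j - i)" using le by simp
      hence "\<xi> ^ j = \<xi> ^ (i + (j - i))" by simp
      thus ?thesis by (simp only: power_add)
    qed
    ultimately show False using le xi0 by simp
  qed
qed (auto simp: eq_commute)

lemma xi_pow_K: "\<xi> ^ j \<in> K" using xi_K sf_pow by blast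

lemma K_nz_eq: "K - {0} = (\<lambda>j. \<xi> ^ j) ` {..<Q - 1}" and card_K: "card K = Q"
proof -
  have sub: "(\<lambda>j. \<xi> ^ j) ` {..<Q - 1} \<subseteq> K - {0}" using xi_pow_K xi0 by auto
  have c1: "card ((\<lambda>j. \<xi> ^ j) ` {..<Q - 1}) = Q - 1"
  proof (subst card_image)
    show "inj_on (\<lambda>j. \<xi> ^ j) {..<Q - 1}"
      by (rule inj_onI, rule xi_pow_inj) auto
  qed simp
  have le: "card K \<le> Q" using card_sf_le k2 by simp
  have "card (K - {0}) = card K - 1" using sf_0 by simp
  hence le2: "card (K - {0}) \<le> Q - 1" using le by simp
  show "K - {0} = (\<lambda>j. \<xi> ^ j) ` {..<Q - 1}"
    using card_subset_eq[OF _ sub] c1 le2 card_mono[OF _ sub] by fastforce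
  with c1 have "card K - 1 = Q - 1" using \<open>card (K - {0}) = card K - 1\<close> by simp
  moreover have "card K \<ge> 1" using sf_0[of k] by (auto simp: Suc_le_eq card_gt_0_iff)
  moreover have "Q \<ge> 1" using qpos by simp
  ultimately show "card K = Q" by simp
qed

lemma K_nz_pow: "x \<in> K \<Longrightarrow> x \<noteq> 0 \<Longrightarrow> \<exists>j. x = \<xi> ^ j"
  using K_nz_eq by auto

lemma card_Fq: "card Fq = q"
proof -
  define N where "N = (Q - 1) div (q - 1)"
  have dv: "q - 1 dvd Q - 1" using dvd_pow_minus_one qpos by simp
  hence NQ: "N * (q - 1) = Q - 1" by (simp add: N_def)
  define z where "z = \<xi> ^ N"
  have zq: "z ^ (q - 1) = 1" using xi_Q NQ by (simp add: z_def flip: power_mult)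
  have zin: "z ^ j \<in> Fq" for j
  proof -
    have jq: "j * q = j + (q - 1) * j" using qpos by (cases q) auto
    have "(z ^ j) ^ q = z ^ (j * q)" by (simp add: power_mult)
    also have "\<dots> = z ^ j * (z ^ (q - 1)) ^ j" unfolding jq by (simp add: power_add power_mult)
    finally have "(z ^ j) ^ q = z ^ j * (z ^ (q - 1)) ^ j" .
    thus ?thesis using zq by (simp add: subfld_def)
  qed
  have inj: "inj_on (\<lambda>j. z ^ j) {..<q - 1}"
  proof (rule inj_onI)
    fix i j assume ij: "i \<in> {..<q - 1}" "j \<in> {..<q - 1}" "z ^ i = z ^ j"
    have "N \<noteq> 0"
    proof
      assume "N = 0"
      hence "Q - 1 = 0" using NQ by simp
      thus False using Q_gt_q q2 by simp
    qed
    hence Np: "N > 0" by simp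
    have "N * i < N * (q - 1)" "N * j < N * (q - 1)" using ij Np by auto
    hence "N * i < Q - 1" "N * j < Q - 1" using NQ by (simp_all only:)
    moreover have "\<xi> ^ (N * i) = \<xi> ^ (N * j)" using ij by (simp add: z_def power_mult)
    ultimately have "N * i = N * j" using xi_pow_inj by blast
    thus "i = j" using Np by simp
  qed
  have sub: "insert 0 ((\<lambda>j. z ^ j) ` {..<q - 1}) \<subseteq> Fq" using zin sf_0 by auto
  have "0 \<notin> (\<lambda>j. z ^ j) ` {..<q - 1}" using xi0 by (auto simp: z_def)
  hence "card (insert 0 ((\<lambda>j. z ^ j) ` {..<q - 1})) = q"
    using card_image[OF inj] qpos by simp
  hence "q \<le> card Fq" using card_mono[OF _ sub] by simp
  moreover have "card Fq \<le> q" using card_sf_le[of 1] by simp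
  ultimately show ?thesis by simp
qed


lemma card_Fq' [simp]: "card (subfld q (Suc 0) :: 'a set) = q" using card_Fq by simp

subsection \<open>Linear algebra over Fq\<close>

lemma span_card:
  assumes ind: "fq_indep q (B :: 'a set)"
  shows "card (fq_span q B) = q ^ card B"
proof -
  define g where "g c = (\<Sum>b\<in>B. c b * b)" for c
  define P where "P = PiE B (\<lambda>_. Fq)"
  have img: "fq_span q B = g ` P"
  proof
    show "fq_span q B \<subseteq> g ` P"
    proof
      fix x assume "x \<in> fq_span q B"
      then obtain c where c: "\<forall>b\<in>B. c b \<in> Fq" "x = (\<Sum>b\<in>B. c b * b)"
        unfolding fq_span_def by blast
      have "restrict c B \<in> P" using c by (simp add: P_def)
      moreover have "g (restrict c B) = x" using c by (simp add: g_def)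
      ultimately show "x \<in> g ` P" by blast
    qed
    show "g ` P \<subseteq> fq_span q B"
      unfolding fq_span_def P_def g_def by (auto simp: PiE_iff)
  qed
  have inj: "inj_on g P"
  proof (rule inj_onI)
    fix c c' assume cc: "c \<in> P" "c' \<in> P" "g c = g c'"
    have "(\<Sum>b\<in>B. (c b - c' b) * b) = g c - g c'"
      by (simp add: g_def left_diff_distrib sum_subtractf)
    hence "(\<Sum>b\<in>B. (c b - c' b) * b) = 0" using cc by simp
    moreover have "\<forall>b\<in>B. c b - c' b \<in> Fq" using cc by (auto simp: P_def PiE_iff intro: sf_diff)
    ultimately have "\<forall>b\<in>B. c b - c' b = 0"
      using ind[unfolded fq_indep_def, rule_format, of "\<lambda>b. c b - c' b"] by blast
    thus "c = c'" using cc unfolding P_def by (intro PiE_ext) auto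
  qed
  have "card (fq_span q B) = card P" using img inj by (simp add: card_image)
  also have "\<dots> = q ^ card B" by (simp add: P_def card_PiE card_Fq)
  finally show ?thesis .
qed

lemma sum_in_subspace:
  assumes W: "fq_subspace q (W :: 'a set)" and "B \<subseteq> W" and "\<forall>b\<in>B. c b \<in> Fq"
  shows "(\<Sum>b\<in>B. c b * b) \<in> W"
proof -
  have "finite B" by simp
  thus ?thesis using assms(2,3)
  proof (induction B rule: finite_induct)
    case empty
    then show ?case using W by (simp add: fq_subspace_def)
  next
    case (insert x F)
    then show ?case using W by (simp add: fq_subspace_def)
  qed
qed

lemma basis_exists:
  assumes W: "fq_subspace q (W :: 'a set)"
  shows "\<exists>B. B \<subseteq> W \<and> fq_indep q B \<and> fq_span q B = W"
proof -
  define S where "S = {B. B \<subseteq> W \<and> fq_indep q B}"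
  have "{} \<in> S" by (simp add: S_def fq_indep_def)
  have "finite S" by simp
  define M where "M = Max (card ` S)"
  have "M \<in> card ` S" unfolding M_def using \<open>{} \<in> S\<close> \<open>finite S\<close> by (intro Max_in) auto
  then obtain B where B: "B \<in> S" "card B = M" by auto
  have maxB: "card B' \<le> card B" if "B' \<in> S" for B'
    using that B \<open>finite S\<close> unfolding M_def by simp
  have BW: "B \<subseteq> W" and indB: "fq_indep q B" using B by (auto simp: S_def)
  have "fq_span q B = W"
  proof
    show "fq_span q B \<subseteq> W"
      unfolding fq_span_def using sum_in_subspace[OF W BW] by blast
    show "W \<subseteq> fq_span q B"
    proof
      fix w assume wW: "w \<in> W"
      show "w \<in> fq_span q B"
      proof (cases "w \<in> B")
        case True
        define c where "c b = (if b = w then 1 else 0 :: 'a)" for b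
        have "(\<Sum>b\<in>B. c b * b) = (\<Sum>b\<in>B. if b = w then b else 0)"
          by (rule sum.cong) (auto simp: c_def)
        also have "\<dots> = w" using True by (simp add: sum.delta')
        finally have "w = (\<Sum>b\<in>B. c b * b)" by simp
        moreover have "\<forall>b\<in>B. c b \<in> Fq" by (auto simp: c_def sf_0 sf_1)
        ultimately show ?thesis unfolding fq_span_def by blast
      next
        case False
        have "card (insert w B) > card B" using False by simp
        hence "insert w B \<notin> S" using maxB by fastforce
        hence "\<not> fq_indep q (insert w B)" using BW wW by (auto simp: S_def)
        then obtain c where c: "\<forall>b\<in>insert w B. c b \<in> Fq"
            "(\<Sum>b\<in>insert w B. c b * b) = 0" "\<exists>b\<in>insert w B. c b \<noteq> 0"
          unfolding fq_indep_def by blast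
        have sum: "c w * w + (\<Sum>b\<in>B. c b * b) = 0" using c(2) False by simp
        have cw: "c w \<noteq> 0"
        proof
          assume "c w = 0"
          hence "(\<Sum>b\<in>B. c b * b) = 0" using sum by simp
          hence "\<forall>b\<in>B. c b = 0" using indB c(1) unfolding fq_indep_def by blast
          thus False using c(3) \<open>c w = 0\<close> by auto
        qed
        define d where "d b = - c b / c w" for b
        have "(\<Sum>b\<in>B. d b * b) = (- 1 / c w) * (\<Sum>b\<in>B. c b * b)"
          by (simp add: d_def sum_distrib_left algebra_simps)
        also have "(\<Sum>b\<in>B. c b * b) = - (c w * w)" using sum by (simp add: eq_neg_iff_add_eq_0 add.commute)
        finally have "(\<Sum>b\<in>B. d b * b) = w" using cw by simp
        moreover have "\<forall>b\<in>B. d b \<in> Fq" using c(1) by (auto simp: d_def intro!: sf_div sf_neg)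
        ultimately show ?thesis unfolding fq_span_def by (intro CollectI exI[of _ d]) auto
      qed
    qed
  qed
  thus ?thesis using BW indB by blast
qed

lemma dim_card:
  assumes W: "fq_subspace q (W :: 'a set)"
  shows "q ^ fq_dim q W = card W"
proof -
  obtain B where B: "B \<subseteq> W" "fq_indep q B" "fq_span q B = W" using basis_exists[OF W] by blast
  have ex: "\<exists>d B. B \<subseteq> W \<and> finite B \<and> card B = d \<and> fq_indep q B \<and> fq_span q B = W"
    using B by auto
  have "\<exists>B. B \<subseteq> W \<and> finite B \<and> card B = fq_dim q W \<and> fq_indep q B \<and> fq_span q B = W"
    unfolding fq_dim_def by (rule someI_ex[OF ex])
  then obtain B' where B': "card B' = fq_dim q W" "fq_indep q B'" "fq_span q B' = W" by blast
  have "card W = q ^ card B'" using span_card[OF B'(2)] B'(3) by simp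
  thus ?thesis using B'(1) by simp
qed

lemma dim_eq:
  assumes "fq_subspace q (W :: 'a set)" "card W = q ^ d"
  shows "fq_dim q W = d"
proof -
  have "q ^ fq_dim q W = q ^ d" using dim_card[OF assms(1)] assms(2) by simp
  thus ?thesis using q2 by simp
qed

lemma dim_le1:
  assumes "fq_subspace q (W :: 'a set)" "card W \<le> q"
  shows "fq_dim q W \<le> 1"
proof -
  have "q ^ fq_dim q W \<le> q ^ 1" using dim_card[OF assms(1)] assms(2) by simp
  thus ?thesis by (rule power_le_imp_le_exp[rotated]) (use q2 in simp)
qed

definition indep2 :: "'a \<Rightarrow> 'a \<Rightarrow> bool" where
  "indep2 x y = (\<forall>c d. c \<in> Fq \<and> d \<in> Fq \<and> c * x + d * y = 0 \<longrightarrow> c = 0 \<and> d = 0)"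

lemma line_card: "(w::'a) \<noteq> 0 \<Longrightarrow> card ((\<lambda>c. c * w) ` Fq) = q"
proof -
  assume "w \<noteq> 0"
  hence "inj_on (\<lambda>c. c * w) Fq" by (auto intro: inj_onI)
  thus ?thesis using card_Fq card_image by metis
qed

lemma small_card:
  assumes W: "fq_subspace q (W :: 'a set)" and nd: "\<forall>x\<in>W. \<forall>y\<in>W. \<not> indep2 x y"
  shows "card W \<le> q"
proof (cases "W \<subseteq> {0}")
  case True
  hence "card W \<le> card {0::'a}" by (intro card_mono) auto
  thus ?thesis using q2 by simp
next
  case False
  then obtain w where w: "w \<in> W" "w \<noteq> 0" by auto
  have "W \<subseteq> (\<lambda>c. c * w) ` Fq"
  proof
    fix x assume x: "x \<in> W"
    then obtain c d where cd: "c \<in> Fq" "d \<in> Fq" "c * x + d * w = 0" "\<not> (c = 0 \<and> d = 0)"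
      using nd w unfolding indep2_def by blast
    have c0: "c \<noteq> 0"
    proof
      assume "c = 0"
      hence "d * w = 0" using cd by simp
      thus False using cd \<open>c = 0\<close> w by simp
    qed
    have "x = (- d / c) * w" using cd(3) c0
      by (simp add: field_simps eq_neg_iff_add_eq_0)
    moreover have "- d / c \<in> Fq" using cd by (intro sf_div sf_neg)
    ultimately show "x \<in> (\<lambda>c. c * w) ` Fq" by blast
  qed
  hence "card W \<le> card ((\<lambda>c. c * w) ` Fq)" by (intro card_mono) auto
  thus ?thesis using line_card w by simp
qed

lemma subspace_scale:
  assumes "fq_subspace q (U :: 'a set)"
  shows "fq_subspace q ((\<lambda>x. \<alpha> * x) ` U)"
proof -
  have A: "0 \<in> U" "\<forall>x\<in>U. \<forall>y\<in>U. x + y \<in> U" "\<forall>c\<in>Fq. \<forall>x\<in>U. c * x \<in> U"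
    using assms unfolding fq_subspace_def by auto
  have "0 \<in> (\<lambda>x. \<alpha> * x) ` U" using A(1) by (intro image_eqI[where x=0]) auto
  moreover have "\<alpha> * x + \<alpha> * y \<in> (\<lambda>x. \<alpha> * x) ` U" if "x \<in> U" "y \<in> U" for x y
    using A(2) that by (intro image_eqI[where x="x + y"]) (auto simp: distrib_left)
  moreover have "c * (\<alpha> * x) \<in> (\<lambda>x. \<alpha> * x) ` U" if "c \<in> Fq" "x \<in> U" for c x
    using A(3) that by (intro image_eqI[where x="c * x"]) (auto simp: mult.left_commute)
  ultimately show ?thesis unfolding fq_subspace_def by blast
qed

lemma subspace_int:
  "fq_subspace q (U :: 'a set) \<Longrightarrow> fq_subspace q V \<Longrightarrow> fq_subspace q (U \<inter> V)"
  unfolding fq_subspace_def by auto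

lemma card_scale: "(\<alpha>::'a) \<noteq> 0 \<Longrightarrow> card ((\<lambda>x. \<alpha> * x) ` U) = card U"
  by (subst card_image) (auto intro: inj_onI)


subsection \<open>Polynomials over K\<close>

abbreviation sg :: "'a \<Rightarrow> 'a" where "sg x \<equiv> x ^ Q"

lemma sg0: "sg 0 = 0" using qpos by simp

lemma coeff_msg: "coeff (map_poly sg g) i = sg (coeff g i)"
  using sg0 by (simp add: coeff_map_poly)

lemma msg_add: "map_poly sg (a + b) = map_poly sg a + map_poly sg b"
  by (rule poly_eqI) (simp add: coeff_msg frob_add)

lemma msg_diff: "map_poly sg (a - b) = map_poly sg a - map_poly sg b"
  by (rule poly_eqI) (simp add: coeff_msg frob_diff)

lemma msg_mult: "map_poly sg (a * b) = map_poly sg a * map_poly sg b"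
  by (rule poly_eqI) (simp add: coeff_msg coeff_mult frob_sum power_mult_distrib)

lemma msg_over: "poly_over K g \<Longrightarrow> map_poly sg g = g"
  by (rule poly_eqI) (simp add: coeff_msg poly_over_def subfld_def)

lemma over_msg: "map_poly sg g = g \<Longrightarrow> poly_over K g"
proof -
  assume "map_poly sg g = g"
  hence "coeff (map_poly sg g) i = coeff g i" for i by simp
  hence "sg (coeff g i) = coeff g i" for i by (simp add: coeff_msg)
  thus ?thesis unfolding poly_over_def subfld_def by simp
qed

lemma div_over:
  assumes f: "poly_over K f" and g: "poly_over K g" and dg: "degree g > 0"
  shows "poly_over K (f div g) \<and> poly_over K (f mod g)"
proof -
  define h where "h = f div g"
  define rm where "rm = f mod g"
  have g0: "g \<noteq> 0" using dg by auto
  have eq: "f = h * g + rm" by (simp add: h_def rm_def)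
  have drm: "degree rm < degree g" using degree_mod_less[OF g0, of f] dg by (auto simp: rm_def)
  define h' where "h' = map_poly sg h"
  define rm' where "rm' = map_poly sg rm"
  have eq': "f = h' * g + rm'"
  proof -
    have "f = map_poly sg f" using msg_over[OF f] by simp
    also have "\<dots> = h' * g + rm'" unfolding h'_def rm'_def
      by (subst eq) (simp add: msg_add msg_mult msg_over[OF g])
    finally show ?thesis .
  qed
  have drm': "degree rm' < degree g" using map_poly_degree_leq[of sg rm] drm by (simp add: rm'_def)
  have hh: "h = h'"
  proof (rule ccontr)
    assume ne: "h \<noteq> h'"
    have "(h - h') * g = rm' - rm" using eq eq' by (simp add: algebra_simps)
    moreover have "degree ((h - h') * g) \<ge> degree g" using ne g0 by (simp add: degree_mult_eq)
    moreover have "degree (rm' - rm) < degree g"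
      using degree_diff_le_max[of rm' rm] drm drm' by simp
    ultimately show False by simp
  qed
  hence "rm = rm'" using eq eq' by simp
  hence "map_poly sg rm = rm" by (simp add: rm'_def)
  moreover have "map_poly sg h = h" using hh by (simp add: h'_def)
  ultimately show ?thesis using over_msg unfolding h_def rm_def by blast
qed

lemma IND:
  assumes "poly_over K g" "poly g \<gamma> = 0" "degree g < r"
  shows "g = 0"
proof -
  obtain f where f: "irreducible_over K f" "degree f = r" "poly f \<gamma> = 0" using gamma by blast
  have fo: "poly_over K f" using f(1) by (simp add: irreducible_over_def)
  show ?thesis using assms
  proof (induction "degree g" arbitrary: g rule: less_induct)
    case less
    show ?case
    proof (rule ccontr)
      assume g0: "g \<noteq> 0"
      show False
      proof (cases "degree g = 0")
        case True
        have gc: "[:coeff g 0:] = g" by (rule degree_0_id[OF True])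
        have "poly [:coeff g 0:] \<gamma> = coeff g 0" by simp
        hence "poly g \<gamma> = coeff g 0" unfolding gc .
        moreover have "coeff g 0 \<noteq> 0" using True g0 leading_coeff_0_iff[of g] by simp
        ultimately show False using less.prems by simp
      next
        case False
        hence dg: "degree g > 0" by simp
        define h where "h = f div g"
        define rm where "rm = f mod g"
        have ov: "poly_over K h" "poly_over K rm" using div_over[OF fo less.prems(1) dg] by (simp_all add: h_def rm_def)
        have eq: "f = h * g + rm" by (simp add: h_def rm_def)
        have "poly f \<gamma> = poly h \<gamma> * poly g \<gamma> + poly rm \<gamma>" using eq by (metis poly_add poly_mult)
        hence "poly rm \<gamma> = 0" using f(3) less.prems(2) by simp
        moreover have drm: "degree rm < degree g \<or> rm = 0" using degree_mod_less[OF g0, of f] by (auto simp: rm_def)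
        ultimately have "rm = 0"
        proof (cases "rm = 0")
          case False
          hence "degree rm < degree g" using drm by simp
          moreover have "degree rm < r" using calculation less.prems(3) by simp
          ultimately show ?thesis using less.hyps[of rm] ov \<open>poly rm \<gamma> = 0\<close> by simp
        qed simp
        hence fhg: "f = h * g" using eq by simp
        have irr: "\<forall>g h. poly_over K g \<and> poly_over K h \<and> f = g * h \<longrightarrow> degree g = 0 \<or> degree h = 0"
          using f(1) unfolding irreducible_over_def by (elim conjE) assumption
        have "degree h = 0 \<or> degree g = 0"
          by (rule irr[rule_format]) (intro conjI ov(1) less.prems(1) fhg)
        hence "degree h = 0" using dg by simp
        moreover have "h \<noteq> 0"
        proof
          assume "h = 0"
          hence "f = 0" using fhg by simp
          hence "degree f = 0" by simp
          thus False using f(2) r2 by simp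
        qed
        ultimately have "degree f = degree g" using fhg g0 by (simp add: degree_mult_eq)
        thus False using f(2) less.prems(3) by simp
      qed
    qed
  qed
qed

lemma coeff_in_K_sum:
  "a \<in> K \<Longrightarrow> (if P then a else 0) \<in> K" using sf_0 by auto

lemma IND2:
  assumes "a \<in> K" "b \<in> K" "1 \<le> l" "l < r" "a + b * \<gamma> ^ l = 0"
  shows "a = 0 \<and> b = 0"
proof -
  define G where "G = Polynomial.monom a 0 + Polynomial.monom b l"
  have "poly G \<gamma> = 0" using assms by (simp add: G_def poly_monom)
  moreover have "poly_over K G" using assms
    by (auto simp: G_def poly_over_def coeff_monom sf_0 intro!: sf_add coeff_in_K_sum)
  moreover have "degree G < r" using assms unfolding G_def
    by (intro le_less_trans[OF degree_add_le_max]) (auto intro: le_less_trans[OF degree_monom_le])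
  ultimately have "G = 0" using IND by blast
  hence "coeff G 0 = 0" "coeff G l = 0" by auto
  thus ?thesis using assms by (simp_all add: G_def coeff_monom)
qed

lemma IND4:
  assumes "a \<in> K" "b \<in> K" "c \<in> K" "d \<in> K" "1 \<le> l1" "1 \<le> l2" "l1 \<noteq> l2" "l1 + l2 < r"
    "a + b * \<gamma> ^ l1 + c * \<gamma> ^ l2 + d * \<gamma> ^ (l1 + l2) = 0"
  shows "a = 0 \<and> b = 0 \<and> c = 0 \<and> d = 0"
proof -
  define G where "G = Polynomial.monom a 0 + Polynomial.monom b l1 + Polynomial.monom c l2 + Polynomial.monom d (l1 + l2)"
  have "poly G \<gamma> = 0" using assms by (simp add: G_def poly_monom)
  moreover have "poly_over K G" using assms
    by (auto simp: G_def poly_over_def coeff_monom sf_0 intro!: sf_add coeff_in_K_sum)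
  moreover have "degree G < r" using assms
  proof -
    have "degree G \<le> l1 + l2" unfolding G_def
      by (intro degree_add_le order.trans[OF degree_monom_le]) auto
    thus ?thesis using assms by simp
  qed
  ultimately have "G = 0" using IND by blast
  hence "coeff G 0 = 0" "coeff G l1 = 0" "coeff G l2 = 0" "coeff G (l1 + l2) = 0" by auto
  thus ?thesis using assms by (simp_all add: G_def coeff_monom)
qed

lemma IND3:
  assumes "a \<in> K" "b \<in> K" "d \<in> K" "1 \<le> l" "l + l < r"
    "a + b * \<gamma> ^ l + d * \<gamma> ^ (l + l) = 0"
  shows "a = 0 \<and> b = 0 \<and> d = 0"
proof -
  define G where "G = Polynomial.monom a 0 + Polynomial.monom b l + Polynomial.monom d (l + l)"
  have "poly G \<gamma> = 0" using assms by (simp add: G_def poly_monom)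
  moreover have "poly_over K G" using assms
    by (auto simp: G_def poly_over_def coeff_monom sf_0 intro!: sf_add coeff_in_K_sum)
  moreover have "degree G < r" using assms
  proof -
    have "degree G \<le> l + l" unfolding G_def
      by (intro degree_add_le order.trans[OF degree_monom_le]) auto
    thus ?thesis using assms by simp
  qed
  ultimately have "G = 0" using IND by blast
  hence "coeff G 0 = 0" "coeff G l = 0" "coeff G (l + l) = 0" by auto
  thus ?thesis using assms by (simp_all add: G_def coeff_monom)
qed


subsection \<open>The subspaces\<close>

lemma e_props: "1 \<le> e" "e + e < r"
proof -
  have c: "\<lceil>real r / 2\<rceil> = int ((r + 1) div 2)"
  proof (cases "even r")
    case True
    then obtain t where "r = 2 * t" by blast
    thus ?thesis by simp
  next
    case False
    then obtain t where t: "r = 2 * t + 1" using oddE by blast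
    have "real r / 2 = real t + 1 / 2" using t by simp
    hence "\<lceil>real r / 2\<rceil> = int t + 1" by (simp add: ceiling_eq_iff)
    thus ?thesis using t by simp
  qed
  have e: "e = (r + 1) div 2 - 1" using e_def c by simp
  show "1 \<le> e" using e r2 by simp
  show "e + e < r" using e r2 by simp
qed

definition phi :: "'a \<Rightarrow> 'a \<Rightarrow> nat \<Rightarrow> 'a \<Rightarrow> 'a" where
  "phi \<tau> \<delta> l u = u + (\<tau> * u ^ q + u) * \<delta> * \<gamma> ^ l"

lemma U_eq: "U_sub q k \<gamma> \<tau> \<delta> l = phi \<tau> \<delta> l ` K"
  by (auto simp: U_sub_def phi_def)

lemma phi_0: "phi \<tau> \<delta> l 0 = 0" using qpos by (simp add: phi_def)

lemma phi_add: "phi \<tau> \<delta> l (u + v) = phi \<tau> \<delta> l u + phi \<tau> \<delta> l v"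
  by (simp add: phi_def frob_add1 algebra_simps)

lemma phi_diff: "phi \<tau> \<delta> l (u - v) = phi \<tau> \<delta> l u - phi \<tau> \<delta> l v"
  by (simp add: phi_def frob_diff1 algebra_simps)

lemma phi_smul: "c \<in> Fq \<Longrightarrow> phi \<tau> \<delta> l (c * u) = c * phi \<tau> \<delta> l u"
  by (simp add: phi_def power_mult_distrib subfld_def algebra_simps)

definition valid :: "'a \<Rightarrow> 'a \<Rightarrow> nat \<Rightarrow> bool" where
  "valid \<tau> \<delta> l \<longleftrightarrow> \<tau> \<in> T \<and> \<delta> \<in> K - {0} \<and> l \<in> {1..e}"

lemma valid_D:
  assumes "valid \<tau> \<delta> l"
  shows "\<tau> \<in> K" "\<tau> \<noteq> 0" "\<delta> \<in> K" "\<delta> \<noteq> 0" "1 \<le> l" "l < r" "l \<le> e"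
  using assms T_sub e_props by (auto simp: valid_def)

lemma phi_zero:
  assumes "valid \<tau> \<delta> l" "w \<in> K" "phi \<tau> \<delta> l w = 0"
  shows "w = 0"
proof -
  note v = valid_D[OF assms(1)]
  have "(\<tau> * w ^ q + w) * \<delta> \<in> K" using v assms(2) by (intro sf_mult sf_add sf_pow) auto
  thus ?thesis using IND2[of w "(\<tau> * w ^ q + w) * \<delta>" l] assms v by (simp add: phi_def mult.assoc)
qed

lemma phi_inj:
  assumes "valid \<tau> \<delta> l" shows "inj_on (phi \<tau> \<delta> l) K"
proof (rule inj_onI)
  fix u v assume uv: "u \<in> K" "v \<in> K" "phi \<tau> \<delta> l u = phi \<tau> \<delta> l v"
  have "phi \<tau> \<delta> l (u - v) = 0" using uv by (simp add: phi_diff)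
  hence "u - v = 0" using phi_zero[OF assms] uv sf_diff by blast
  thus "u = v" by simp
qed

lemma U_subspace:
  assumes "valid \<tau> \<delta> l" shows "fq_subspace q (U_sub q k \<gamma> \<tau> \<delta> l)"
proof -
  have "0 \<in> phi \<tau> \<delta> l ` K" using phi_0 sf_0 by (metis image_eqI)
  moreover have "x + y \<in> phi \<tau> \<delta> l ` K" if xy: "x \<in> phi \<tau> \<delta> l ` K" "y \<in> phi \<tau> \<delta> l ` K" for x y
  proof -
    obtain u v where "u \<in> K" "v \<in> K" "x = phi \<tau> \<delta> l u" "y = phi \<tau> \<delta> l v" using xy by blast
    thus ?thesis using phi_add[of \<tau> \<delta> l u v] sf_add[of u k v] by (metis image_eqI)
  qed
  moreover have "c * x \<in> phi \<tau> \<delta> l ` K" if cx: "c \<in> Fq" "x \<in> phi \<tau> \<delta> l ` K" for c x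
  proof -
    obtain u where "u \<in> K" "x = phi \<tau> \<delta> l u" using cx by blast
    moreover have "c \<in> K" using cx Fq_sub_K by blast
    ultimately show ?thesis using phi_smul[OF cx(1), of \<tau> \<delta> l u] sf_mult[of c k u] by (metis image_eqI)
  qed
  ultimately show ?thesis unfolding fq_subspace_def U_eq by blast
qed

lemma U_card: "valid \<tau> \<delta> l \<Longrightarrow> card (U_sub q k \<gamma> \<tau> \<delta> l) = Q"
  unfolding U_eq using phi_inj card_K by (simp add: card_image)

lemma xi_notin_Fq: "\<xi> \<notin> Fq"
proof
  assume "\<xi> \<in> Fq"
  hence "\<xi> ^ q = \<xi>" by (simp add: subfld_def)
  moreover have "\<xi> ^ q = \<xi> * \<xi> ^ (q - 1)" using qpos by (simp flip: power_Suc)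
  ultimately have "\<xi> ^ (q - 1) = 1" using xi0 by simp
  moreover have "0 < q - 1" "q - 1 < Q - 1" using q2 Q_gt_q by auto
  ultimately show False using xi_ord by blast
qed

lemma U_indep:
  assumes "valid \<tau> \<delta> l"
  shows "indep2 (phi \<tau> \<delta> l 1) (phi \<tau> \<delta> l \<xi>)"
  unfolding indep2_def
proof (intro allI impI)
  fix c d assume cd: "c \<in> Fq \<and> d \<in> Fq \<and> c * phi \<tau> \<delta> l 1 + d * phi \<tau> \<delta> l \<xi> = 0"
  have "phi \<tau> \<delta> l (c * 1 + d * \<xi>) = 0" using cd by (simp only: phi_add phi_smul)
  moreover have "c * 1 + d * \<xi> \<in> K" using cd Fq_sub_K xi_K sf_1 by (intro sf_add sf_mult) auto
  ultimately have z: "c + d * \<xi> = 0" using phi_zero[OF assms] by simp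
  show "c = 0 \<and> d = 0"
  proof (cases "d = 0")
    case True thus ?thesis using z by simp
  next
    case False
    hence "\<xi> = - c / d" using z by (simp add: field_simps eq_neg_iff_add_eq_0 add.commute)
    moreover have "- c / d \<in> Fq" using cd by (intro sf_div sf_neg) auto
    ultimately show ?thesis using xi_notin_Fq by simp
  qed
qed

lemma phi_in_U: "u \<in> K \<Longrightarrow> phi \<tau> \<delta> l u \<in> U_sub q k \<gamma> \<tau> \<delta> l"
  unfolding U_eq by blast


lemma expand4:
  fixes u1 u2 v1 v2 s1 s2 t1 t2 g1 g2 :: "'b::comm_ring"
  shows "(u1 + s1 * g1) * (v2 + t2 * g2) - (u2 + s2 * g1) * (v1 + t1 * g2) =
    (u1 * v2 - u2 * v1) + (s1 * v2 - s2 * v1) * g1 + (u1 * t2 - u2 * t1) * g2 + (s1 * t2 - s2 * t1) * (g1 * g2)"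
  by (simp add: algebra_simps)

lemma phi_alt: "phi \<tau> \<delta> l u = u + ((\<tau> * u ^ q + u) * \<delta>) * \<gamma> ^ l"
  by (simp add: phi_def mult.assoc)

lemma X1f_gen: fixes u1 v1 lam t d :: "'b::field"
  shows "u1 * ((t * (lam*v1)^q + lam*v1)*d) - (lam*u1)*((t*v1^q + v1)*d) = u1*d*t*v1^q*(lam^q - lam)"
  by (simp add: power_mult_distrib algebra_simps)

lemma X2f_gen: fixes u1 v1 lam t d :: "'b::field"
  shows "((t * u1 ^ q + u1) * d) * (lam * v1) - ((t * (lam * u1) ^ q + lam * u1) * d) * v1 = d * t * u1 ^ q * v1 * (lam - lam ^ q)"
  by (simp add: power_mult_distrib algebra_simps)

lemma X3f_gen: fixes u1 v1 lam t1 t2 d1 d2 :: "'b::field"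
  shows "((t1 * u1 ^ q + u1) * d1) * ((t2 * (lam*v1) ^ q + lam*v1) * d2) - ((t1 * (lam*u1) ^ q + lam*u1) * d1) * ((t2 * v1 ^ q + v1) * d2) = d1 * d2 * (lam - lam ^ q) * (t1 * u1 ^ q * v1 - t2 * u1 * v1 ^ q)"
  by (simp add: power_mult_distrib algebra_simps)

lemma sidon:
  assumes v1: "valid \<tau>1 \<delta>1 l1" and v2: "valid \<tau>2 \<delta>2 l2" and \<alpha>0: "\<alpha> \<noteq> 0"
    and w1: "w1 \<in> (\<lambda>x. \<alpha> * x) ` U_sub q k \<gamma> \<tau>1 \<delta>1 l1" "w1 \<in> U_sub q k \<gamma> \<tau>2 \<delta>2 l2"
    and w2: "w2 \<in> (\<lambda>x. \<alpha> * x) ` U_sub q k \<gamma> \<tau>1 \<delta>1 l1" "w2 \<in> U_sub q k \<gamma> \<tau>2 \<delta>2 l2"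
    and ind: "indep2 w1 w2"
  shows "\<tau>1 = \<tau>2 \<and> \<delta>1 = \<delta>2 \<and> l1 = l2 \<and> \<alpha> \<in> Fq"
proof -
  note V1 = valid_D[OF v1] and V2 = valid_D[OF v2]
  obtain u1 where u1: "u1 \<in> K" "w1 = \<alpha> * phi \<tau>1 \<delta>1 l1 u1" using w1(1) unfolding U_eq by blast
  obtain u2 where u2: "u2 \<in> K" "w2 = \<alpha> * phi \<tau>1 \<delta>1 l1 u2" using w2(1) unfolding U_eq by blast
  obtain v1 where v1': "v1 \<in> K" "w1 = phi \<tau>2 \<delta>2 l2 v1" using w1(2) unfolding U_eq by blast
  obtain v2 where v2': "v2 \<in> K" "w2 = phi \<tau>2 \<delta>2 l2 v2" using w2(2) unfolding U_eq by blast
  have w10: "w1 \<noteq> 0"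
  proof
    assume "w1 = 0"
    hence "1 * w1 + 0 * w2 = 0" by simp
    thus False using ind[unfolded indep2_def, rule_format, of 1 0] sf_0 sf_1 by simp
  qed
  have u10: "u1 \<noteq> 0"
  proof
    assume "u1 = 0"
    hence "w1 = 0" using u1(2) phi_0 by simp
    thus False using w10 by simp
  qed
  have v10: "v1 \<noteq> 0"
  proof
    assume "v1 = 0"
    hence "w1 = 0" using v1'(2) phi_0 by simp
    thus False using w10 by simp
  qed
  define lam where "lam = u2 / u1"
  have lamK: "lam \<in> K" using u1 u2 sf_div by (simp add: lam_def)
  have u2l: "u2 = lam * u1" using u10 by (simp add: lam_def)
  have lamq: "lam - lam ^ q \<noteq> 0"
  proof
    assume "lam - lam ^ q = 0"
    hence lF: "lam \<in> Fq" by (simp add: subfld_def)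
    have "w2 = lam * w1" using u1(2) u2(2) u2l phi_smul[OF lF, of \<tau>1 \<delta>1 l1 u1]
      by (simp add: mult.left_commute)
    hence "lam * w1 + (-1) * w2 = 0" by simp
    moreover have "-1 \<in> Fq" using sf_neg sf_1 by blast
    ultimately show False using ind[unfolded indep2_def, rule_format, of lam "-1"] lF by simp
  qed
  define s1 where "s1 = (\<tau>1 * u1 ^ q + u1) * \<delta>1"
  define s2 where "s2 = (\<tau>1 * u2 ^ q + u2) * \<delta>1"
  define t1 where "t1 = (\<tau>2 * v1 ^ q + v1) * \<delta>2"
  define t2 where "t2 = (\<tau>2 * v2 ^ q + v2) * \<delta>2"
  have sK: "s1 \<in> K" "s2 \<in> K" "t1 \<in> K" "t2 \<in> K"
    unfolding s1_def s2_def t1_def t2_def using V1 V2 u1 u2 v1' v2'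
    by (auto intro!: sf_mult sf_add sf_pow)
  have key: "phi \<tau>1 \<delta>1 l1 u1 * phi \<tau>2 \<delta>2 l2 v2 = phi \<tau>1 \<delta>1 l1 u2 * phi \<tau>2 \<delta>2 l2 v1"
  proof -
    have "phi \<tau>2 \<delta>2 l2 v2 = \<alpha> * phi \<tau>1 \<delta>1 l1 u2" "phi \<tau>2 \<delta>2 l2 v1 = \<alpha> * phi \<tau>1 \<delta>1 l1 u1"
      using u1 u2 v1' v2' by simp_all
    thus ?thesis by (simp add: mult_ac)
  qed
  define X0 where "X0 = u1 * v2 - u2 * v1"
  define X2 where "X2 = s1 * v2 - s2 * v1"
  define X1 where "X1 = u1 * t2 - u2 * t1"
  define X3 where "X3 = s1 * t2 - s2 * t1"
  have XK: "X0 \<in> K" "X1 \<in> K" "X2 \<in> K" "X3 \<in> K"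
    unfolding X0_def X1_def X2_def X3_def using sK u1 u2 v1' v2' by (auto intro!: sf_mult sf_diff)
  have E: "X0 + X2 * \<gamma> ^ l1 + X1 * \<gamma> ^ l2 + X3 * \<gamma> ^ (l1 + l2) = 0"
  proof -
    have "X0 + X2 * \<gamma> ^ l1 + X1 * \<gamma> ^ l2 + X3 * \<gamma> ^ (l1 + l2) =
      phi \<tau>1 \<delta>1 l1 u1 * phi \<tau>2 \<delta>2 l2 v2 - phi \<tau>1 \<delta>1 l1 u2 * phi \<tau>2 \<delta>2 l2 v1"
      unfolding phi_alt X0_def X1_def X2_def X3_def s1_def[symmetric] s2_def[symmetric]
        t1_def[symmetric] t2_def[symmetric] power_add expand4 ..
    thus ?thesis using key by simp
  qed
  have lsum: "l1 + l2 < r" using V1 V2 e_props by linarith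
  have cases: "X0 = 0 \<and> ((l1 = l2 \<and> X1 + X2 = 0 \<and> X3 = 0) \<or> (l1 \<noteq> l2 \<and> X1 = 0))"
  proof (cases "l1 = l2")
    case True
    have "X0 + (X2 + X1) * \<gamma> ^ l1 + X3 * \<gamma> ^ (l1 + l1) = 0" using E True by (simp add: algebra_simps)
    moreover have "X2 + X1 \<in> K" using XK by (intro sf_add)
    ultimately have "X0 = 0 \<and> X2 + X1 = 0 \<and> X3 = 0" using IND3[of X0 "X2 + X1" X3 l1] XK V1 True lsum by simp
    thus ?thesis using True by (simp add: add.commute)
  next
    case False
    have "X0 = 0 \<and> X2 = 0 \<and> X1 = 0 \<and> X3 = 0" using IND4[OF XK(1) XK(3) XK(2) XK(4) V1(5) V2(5) False lsum E] .
    thus ?thesis using False by simp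
  qed
  have v2l: "v2 = lam * v1"
  proof -
    have "u1 * (v2 - lam * v1) = X0" by (simp add: X0_def u2l algebra_simps)
    hence "u1 * (v2 - lam * v1) = 0" using cases by simp
    thus ?thesis using u10 by simp
  qed
  have X1f: "X1 = u1 * \<delta>2 * \<tau>2 * v1 ^ q * (lam ^ q - lam)"
    unfolding X1_def t1_def t2_def u2l v2l by (rule X1f_gen)
  have X2f: "X2 = \<delta>1 * \<tau>1 * u1 ^ q * v1 * (lam - lam ^ q)"
    unfolding X2_def s1_def s2_def u2l v2l by (rule X2f_gen)
  have X3f: "X3 = \<delta>1 * \<delta>2 * (lam - lam ^ q) * (\<tau>1 * u1 ^ q * v1 - \<tau>2 * u1 * v1 ^ q)"
    unfolding X3_def s1_def s2_def t1_def t2_def u2l v2l by (rule X3f_gen)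
  have lq2: "lam ^ q - lam \<noteq> 0"
  proof -
    have "lam ^ q - lam = - (lam - lam ^ q)" by simp
    thus ?thesis using lamq by simp
  qed
  have ll: "l1 = l2"
  proof (rule ccontr)
    assume "l1 \<noteq> l2"
    hence "X1 = 0" using cases by simp
    thus False using X1f u10 V2 v10 lq2 by simp
  qed
  hence X13: "X1 + X2 = 0" "X3 = 0" using cases by auto
  have Zeq: "\<tau>1 * u1 ^ q * v1 = \<tau>2 * u1 * v1 ^ q"
    using X13(2) X3f V1 V2 lamq by simp
  have Z0: "\<tau>1 * u1 ^ q * v1 \<noteq> 0" using V1 u10 v10 by simp
  have "X1 + X2 = (lam - lam ^ q) * (\<delta>1 - \<delta>2) * (\<tau>1 * u1 ^ q * v1)"
    using Zeq unfolding X1f X2f by (simp add: algebra_simps)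
  hence dd: "\<delta>1 = \<delta>2" using X13(1) lamq Z0 u10 qpos by simp
  define \<mu> where "\<mu> = v1 / u1"
  have \<mu>K: "\<mu> \<in> K" using u1 v1' sf_div by (simp add: \<mu>_def)
  have \<mu>0: "\<mu> \<noteq> 0" using u10 v10 by (simp add: \<mu>_def)
  have v1m: "v1 = \<mu> * u1" using u10 by (simp add: \<mu>_def)
  have "(u1 ^ q * u1) * (\<tau>1 * \<mu>) = (u1 ^ q * u1) * (\<tau>2 * \<mu> ^ q)"
    using Zeq unfolding v1m by (simp add: power_mult_distrib algebra_simps)
  hence tm: "\<tau>1 * \<mu> = \<tau>2 * \<mu> ^ q" using u10 by simp
  have mq: "\<mu> ^ q = \<mu> * \<mu> ^ (q - 1)" using qpos by (simp flip: power_Suc)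
  have t1eq: "\<tau>1 = \<tau>2 * \<mu> ^ (q - 1)"
  proof -
    have "\<mu> * \<tau>1 = \<mu> * (\<tau>2 * \<mu> ^ (q - 1))" using tm mq by (simp add: algebra_simps)
    thus ?thesis using \<mu>0 by simp
  qed
  obtain j where j: "\<mu> = \<xi> ^ j" using K_nz_pow[OF \<mu>K \<mu>0] by blast
  have "\<mu> ^ (q - 1) = (\<xi> ^ (q - 1)) ^ j" unfolding j by (simp flip: power_mult add: mult.commute)
  hence t1j: "\<tau>1 = \<tau>2 * (\<xi> ^ (q - 1)) ^ j" using t1eq by simp
  have t1K: "\<tau>1 \<in> K - {0}" using V1 by simp
  have t1T: "\<tau>1 \<in> T" "\<tau>2 \<in> T" using v1 v2 by (auto simp: valid_def)
  have "\<exists>!\<tau>. \<tau> \<in> T \<and> (\<exists>j::nat. \<tau>1 = \<tau> * (\<xi> ^ (q - 1)) ^ j)" using T_rep t1K by blast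
  moreover have "\<tau>1 \<in> T \<and> (\<exists>j::nat. \<tau>1 = \<tau>1 * (\<xi> ^ (q - 1)) ^ j)" using t1T by (auto intro: exI[of _ 0])
  moreover have "\<tau>2 \<in> T \<and> (\<exists>j::nat. \<tau>1 = \<tau>2 * (\<xi> ^ (q - 1)) ^ j)" using t1T t1j by blast
  ultimately have tt: "\<tau>1 = \<tau>2" by blast
  have "\<mu> ^ (q - 1) = 1" using t1eq tt V1 by simp
  hence \<mu>F: "\<mu> \<in> Fq" using mq by (simp add: subfld_def)
  have "w1 = \<mu> * phi \<tau>1 \<delta>1 l1 u1"
    using v1'(2) v1m phi_smul[OF \<mu>F, of \<tau>1 \<delta>1 l1 u1] tt dd ll by simp
  hence "\<alpha> * phi \<tau>1 \<delta>1 l1 u1 = \<mu> * phi \<tau>1 \<delta>1 l1 u1" using u1(2) by simp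
  moreover have "phi \<tau>1 \<delta>1 l1 u1 \<noteq> 0" using w10 u1(2) by simp
  ultimately have "\<alpha> = \<mu>" by simp
  thus ?thesis using tt dd ll \<mu>F by simp
qed


subsection \<open>Orbits\<close>

lemma sub_scale_Fq:
  assumes W: "fq_subspace q (W :: 'a set)" and c: "c \<in> Fq" "c \<noteq> 0"
  shows "(\<lambda>x. c * x) ` W = W"
proof
  show "(\<lambda>x. c * x) ` W \<subseteq> W" using W c unfolding fq_subspace_def by auto
  show "W \<subseteq> (\<lambda>x. c * x) ` W"
  proof
    fix x assume x: "x \<in> W"
    have "inverse c * x \<in> W" using W x sf_inv[OF c(1)] unfolding fq_subspace_def by blast
    moreover have "x = c * (inverse c * x)" using c by simp
    ultimately show "x \<in> (\<lambda>x. c * x) ` W" by blast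
  qed
qed

lemma U_two:
  assumes "valid \<tau> \<delta> l"
  shows "\<exists>w1 w2. w1 \<in> U_sub q k \<gamma> \<tau> \<delta> l \<and> w2 \<in> U_sub q k \<gamma> \<tau> \<delta> l \<and> indep2 w1 w2"
  using U_indep[OF assms] phi_in_U[OF sf_1] phi_in_U[OF xi_K] by blast

lemma orbit_eq:
  assumes v1: "valid \<tau>1 \<delta>1 l1" and v2: "valid \<tau>2 \<delta>2 l2" and \<alpha>0: "\<alpha> \<noteq> 0"
    and eq: "(\<lambda>x. \<alpha> * x) ` U_sub q k \<gamma> \<tau>1 \<delta>1 l1 = U_sub q k \<gamma> \<tau>2 \<delta>2 l2"
  shows "\<tau>1 = \<tau>2 \<and> \<delta>1 = \<delta>2 \<and> l1 = l2 \<and> \<alpha> \<in> Fq"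
proof -
  obtain w1 w2 where w: "w1 \<in> U_sub q k \<gamma> \<tau>2 \<delta>2 l2" "w2 \<in> U_sub q k \<gamma> \<tau>2 \<delta>2 l2" "indep2 w1 w2"
    using U_two[OF v2] by blast
  show ?thesis by (rule sidon[OF v1 v2 \<alpha>0]) (use w eq in auto)
qed

lemma scale_scale: "(\<lambda>x. a * x) ` ((\<lambda>x. b * x) ` U) = (\<lambda>x. (a * b) * (x::'a)) ` U"
  by (simp add: image_image mult.assoc)

lemma scale_eq_iff:
  assumes v: "valid \<tau> \<delta> l" and a: "\<alpha> \<noteq> 0" and b: "\<beta> \<noteq> 0"
  shows "(\<lambda>x. \<alpha> * x) ` U_sub q k \<gamma> \<tau> \<delta> l = (\<lambda>x. \<beta> * x) ` U_sub q k \<gamma> \<tau> \<delta> l \<longleftrightarrow> \<alpha> / \<beta> \<in> Fq"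
proof
  assume eq: "(\<lambda>x. \<alpha> * x) ` U_sub q k \<gamma> \<tau> \<delta> l = (\<lambda>x. \<beta> * x) ` U_sub q k \<gamma> \<tau> \<delta> l"
  have "(\<lambda>x. inverse \<beta> * x) ` ((\<lambda>x. \<alpha> * x) ` U_sub q k \<gamma> \<tau> \<delta> l)
      = (\<lambda>x. inverse \<beta> * x) ` ((\<lambda>x. \<beta> * x) ` U_sub q k \<gamma> \<tau> \<delta> l)" using eq by simp
  hence "(\<lambda>x. (\<alpha> / \<beta>) * x) ` U_sub q k \<gamma> \<tau> \<delta> l = U_sub q k \<gamma> \<tau> \<delta> l"
    unfolding scale_scale using b by (simp add: divide_inverse mult.commute)
  thus "\<alpha> / \<beta> \<in> Fq" using orbit_eq[OF v v] a b by simp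
next
  assume F: "\<alpha> / \<beta> \<in> Fq"
  have "(\<lambda>x. \<alpha> * x) ` U_sub q k \<gamma> \<tau> \<delta> l = (\<lambda>x. \<beta> * x) ` ((\<lambda>x. (\<alpha> / \<beta>) * x) ` U_sub q k \<gamma> \<tau> \<delta> l)"
    unfolding scale_scale using b by simp
  also have "(\<lambda>x. (\<alpha> / \<beta>) * x) ` U_sub q k \<gamma> \<tau> \<delta> l = U_sub q k \<gamma> \<tau> \<delta> l"
    using sub_scale_Fq[OF U_subspace[OF v] F] a b by simp
  finally show "(\<lambda>x. \<alpha> * x) ` U_sub q k \<gamma> \<tau> \<delta> l = (\<lambda>x. \<beta> * x) ` U_sub q k \<gamma> \<tau> \<delta> l" .
qed

lemma fiber_count:
  assumes "finite A" "\<And>x. x \<in> A \<Longrightarrow> card {y \<in> A. f y = f x} = mm"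
  shows "card A = card (f ` A) * mm"
proof -
  have A: "A = (\<Union>z\<in>f ` A. {y \<in> A. f y = z})" by auto
  have "card A = (\<Sum>z\<in>f ` A. card {y \<in> A. f y = z})"
    by (subst A, rule card_UN_disjoint) (use assms(1) in auto)
  also have "\<dots> = (\<Sum>z\<in>f ` A. mm)" by (rule sum.cong) (use assms(2) in auto)
  finally show ?thesis by simp
qed

lemma orbit_card:
  assumes v: "valid \<tau> \<delta> l"
  shows "card (orbit (U_sub q k \<gamma> \<tau> \<delta> l)) * (q - 1) = q ^ n - 1"
proof -
  let ?U = "U_sub q k \<gamma> \<tau> \<delta> l"
  define f where "f a = (\<lambda>x. a * x) ` ?U" for a
  define A where "A = (UNIV - {0} :: 'a set)"
  have orb: "orbit ?U = f ` A" by (auto simp: orbit_def f_def A_def)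
  have fib: "card {y \<in> A. f y = f x} = q - 1" if x: "x \<in> A" for x
  proof -
    have x0: "x \<noteq> 0" using x by (simp add: A_def)
    have "{y \<in> A. f y = f x} = (\<lambda>c. c * x) ` (Fq - {0})"
    proof
      show "{y \<in> A. f y = f x} \<subseteq> (\<lambda>c. c * x) ` (Fq - {0})"
      proof
        fix y assume "y \<in> {y \<in> A. f y = f x}"
        hence y: "y \<noteq> 0" "f y = f x" by (auto simp: A_def)
        hence "y / x \<in> Fq" using scale_eq_iff[OF v y(1) x0] by (simp add: f_def)
        moreover have "y = (y / x) * x" "y / x \<noteq> 0" using x0 y by auto
        ultimately show "y \<in> (\<lambda>c. c * x) ` (Fq - {0})" by blast
      qed
      show "(\<lambda>c. c * x) ` (Fq - {0}) \<subseteq> {y \<in> A. f y = f x}"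
      proof
        fix y assume "y \<in> (\<lambda>c. c * x) ` (Fq - {0})"
        then obtain c where c: "c \<in> Fq" "c \<noteq> 0" "y = c * x" by blast
        have "(c * x) / x \<in> Fq" using c x0 by simp
        hence "f (c * x) = f x" using scale_eq_iff[OF v _ x0, of "c * x"] c x0 by (simp add: f_def)
        thus "y \<in> {y \<in> A. f y = f x}" using c x0 by (simp add: A_def)
      qed
    qed
    moreover have "inj_on (\<lambda>c. c * x) (Fq - {0})" using x0 by (auto intro: inj_onI)
    ultimately have "card {y \<in> A. f y = f x} = card (Fq - {0})" by (simp add: card_image)
    also have "\<dots> = q - 1" using sf_0 card_Fq by simp
    finally show ?thesis .
  qed
  have "card A = card (f ` A) * (q - 1)" using fiber_count[of A f "q - 1"] fib by auto
  moreover have "card A = q ^ n - 1" using card_F by (simp add: A_def card_Diff_singleton)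
  ultimately show ?thesis using orb by simp
qed

lemma card_T: "card T = q - 1"
proof -
  define N where "N = (Q - 1) div (q - 1)"
  have NQ: "N * (q - 1) = Q - 1" using dvd_pow_minus_one qpos by (simp add: N_def)
  have Np: "N > 0"
  proof (rule ccontr)
    assume "\<not> N > 0"
    hence "Q - 1 = 0" using NQ by simp
    thus False using Q_gt_q q2 by simp
  qed
  define z where "z = \<xi> ^ (q - 1)"
  have zN: "z ^ N = 1" using xi_Q NQ by (simp add: z_def flip: power_mult) (simp add: mult.commute)
  define H where "H = (\<lambda>j. z ^ j) ` {..<N}"
  have zmod: "z ^ j = z ^ (j mod N)" for j
  proof -
    have "z ^ j = z ^ (N * (j div N) + j mod N)" by simp
    also have "\<dots> = (z ^ N) ^ (j div N) * z ^ (j mod N)" by (simp only: power_add power_mult)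
    finally show ?thesis using zN by simp
  qed
  have cH: "card H = N"
  proof -
    have "inj_on (\<lambda>j. z ^ j) {..<N}"
    proof (rule inj_onI)
      fix i j assume ij: "i \<in> {..<N}" "j \<in> {..<N}" "z ^ i = z ^ j"
      have q1: "q - 1 > 0" using q2 by simp
      have "(q - 1) * i < (q - 1) * N" "(q - 1) * j < (q - 1) * N" using ij q1 by auto
      moreover have NQ': "(q - 1) * N = Q - 1" using NQ by (simp add: mult.commute)
      ultimately have lt: "(q - 1) * i < Q - 1" "(q - 1) * j < Q - 1" by (simp_all only: NQ')
      have "\<xi> ^ ((q - 1) * i) = \<xi> ^ ((q - 1) * j)" using ij by (simp add: z_def power_mult)
      hence "(q - 1) * i = (q - 1) * j" using xi_pow_inj lt by blast
      thus "i = j" using q2 by simp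
    qed
    thus ?thesis by (simp add: H_def card_image)
  qed
  have bij: "bij_betw (\<lambda>(t, h). t * h) (T \<times> H) (K - {0})"
  proof (rule bij_betwI')
    fix a b assume ab: "a \<in> T \<times> H" "b \<in> T \<times> H"
    obtain t1 h1 t2 h2 where a: "a = (t1, h1)" and b: "b = (t2, h2)" by (cases a, cases b) auto
    obtain i1 where i1: "h1 = z ^ i1" using ab a H_def by auto
    obtain i2 where i2: "h2 = z ^ i2" using ab b H_def by auto
    show "((\<lambda>(t, h). t * h) a = (\<lambda>(t, h). t * h) b) = (a = b)"
    proof
      assume eq: "(\<lambda>(t, h). t * h) a = (\<lambda>(t, h). t * h) b"
      have tT: "t1 \<in> T" "t2 \<in> T" using ab a b by auto
      have t0: "t1 \<noteq> 0" "t1 \<in> K" "t2 \<noteq> 0" using tT T_sub by auto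
      have zK: "z ^ i \<in> K" "z ^ i \<noteq> 0" for i using xi_pow_K[of "(q - 1) * i"] xi0
        by (simp_all add: z_def power_mult)
      define x where "x = t1 * h1"
      have xK: "x \<in> K - {0}" using t0 zK i1 by (auto simp: x_def intro: sf_mult)
      have "\<exists>!\<tau>. \<tau> \<in> T \<and> (\<exists>j::nat. x = \<tau> * (\<xi> ^ (q - 1)) ^ j)" using T_rep xK by blast
      moreover have "t1 \<in> T \<and> (\<exists>j::nat. x = t1 * (\<xi> ^ (q - 1)) ^ j)"
        using tT i1 by (auto simp: x_def z_def)
      moreover have "t2 \<in> T \<and> (\<exists>j::nat. x = t2 * (\<xi> ^ (q - 1)) ^ j)"
        using tT i2 eq a b by (auto simp: x_def z_def)
      ultimately have "t1 = t2" by blast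
      moreover have "h1 = h2" using eq a b \<open>t1 = t2\<close> t0 by simp
      ultimately show "a = b" using a b by simp
    qed simp
  next
    fix a assume "a \<in> T \<times> H"
    then obtain t h where a: "a = (t, h)" "t \<in> T" "h \<in> H" by blast
    then obtain i where "h = z ^ i" using H_def by auto
    moreover have "z ^ i \<in> K" "z ^ i \<noteq> 0" using xi_pow_K[of "(q - 1) * i"] xi0
      by (simp_all add: z_def power_mult)
    moreover have "t \<in> K" "t \<noteq> 0" using a T_sub by auto
    ultimately show "(\<lambda>(t, h). t * h) a \<in> K - {0}" using a by (auto intro: sf_mult)
  next
    fix x assume x: "x \<in> K - {0}"
    then obtain t j where tj: "t \<in> T" "x = t * (\<xi> ^ (q - 1)) ^ j" using T_rep by blast
    have "z ^ (j mod N) \<in> H" using Np by (simp add: H_def)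
    moreover have "x = t * z ^ (j mod N)" using tj zmod by (simp add: z_def)
    ultimately have "(t, z ^ (j mod N)) \<in> T \<times> H" "x = (\<lambda>(t, h). t * h) (t, z ^ (j mod N))"
      using tj by auto
    thus "\<exists>a\<in>T \<times> H. x = (\<lambda>(t, h). t * h) a" by blast
  qed
  hence "card (T \<times> H) = card (K - {0})" by (rule bij_betw_same_card)
  hence "card T * N = Q - 1" using cH card_K sf_0 by (simp add: card_cartesian_product)
  hence "card T * N = (q - 1) * N" using NQ by (simp add: mult.commute)
  thus ?thesis using Np by simp
qed

definition CC :: "'a set set" where
  "CC = \<Union>{orbit (U_sub q k \<gamma> \<tau> \<delta> l) | \<tau> \<delta> l. \<tau> \<in> T \<and> \<delta> \<in> subfld q k - {0} \<and> l \<in> {1..e}}"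

lemma CC_mem: "U \<in> CC \<longleftrightarrow> (\<exists>\<tau> \<delta> l \<alpha>. valid \<tau> \<delta> l \<and> \<alpha> \<noteq> 0 \<and> U = (\<lambda>x. \<alpha> * x) ` U_sub q k \<gamma> \<tau> \<delta> l)"
  unfolding CC_def valid_def orbit_def by blast


lemma CC_obtain:
  assumes "U \<in> CC"
  obtains \<tau> \<delta> l \<alpha> where "valid \<tau> \<delta> l" "\<alpha> \<noteq> 0" "U = (\<lambda>x. \<alpha> * x) ` U_sub q k \<gamma> \<tau> \<delta> l"
proof -
  have "\<exists>\<tau> \<delta> l \<alpha>. valid \<tau> \<delta> l \<and> \<alpha> \<noteq> 0 \<and> U = (\<lambda>x. \<alpha> * x) ` U_sub q k \<gamma> \<tau> \<delta> l"
    using assms by (simp only: CC_mem)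
  thus ?thesis using that by (elim exE conjE)
qed

lemma CC_sub: "U \<in> CC \<Longrightarrow> fq_subspace q U \<and> fq_dim q U = k"
proof -
  assume "U \<in> CC"
  then obtain \<tau> \<delta> l \<alpha> where v: "valid \<tau> \<delta> l" "\<alpha> \<noteq> 0" "U = (\<lambda>x. \<alpha> * x) ` U_sub q k \<gamma> \<tau> \<delta> l"
    by (rule CC_obtain)
  have S: "fq_subspace q U" unfolding v(3) by (rule subspace_scale[OF U_subspace[OF v(1)]])
  have "card U = q ^ k" unfolding v(3) using card_scale[OF v(2)] U_card[OF v(1)] by simp
  thus ?thesis using S dim_eq[OF S] by simp
qed

lemma CC_cyc: "U \<in> CC \<Longrightarrow> \<alpha> \<noteq> 0 \<Longrightarrow> (\<lambda>x. \<alpha> * x) ` U \<in> CC"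
proof -
  assume U: "U \<in> CC" and a: "\<alpha> \<noteq> 0"
  obtain \<tau> \<delta> l \<beta> where v: "valid \<tau> \<delta> l" "\<beta> \<noteq> 0" "U = (\<lambda>x. \<beta> * x) ` U_sub q k \<gamma> \<tau> \<delta> l"
    using U by (rule CC_obtain)
  have "(\<lambda>x. \<alpha> * x) ` U = (\<lambda>x. (\<alpha> * \<beta>) * x) ` U_sub q k \<gamma> \<tau> \<delta> l" unfolding v(3) scale_scale ..
  moreover have "\<alpha> * \<beta> \<noteq> 0" using a v by simp
  ultimately show ?thesis unfolding CC_mem using v(1) by blast
qed

lemma indep2_scale: "a \<noteq> 0 \<Longrightarrow> indep2 x y \<Longrightarrow> indep2 (a * x) (a * y)"
  unfolding indep2_def
proof (intro allI impI)
  fix c d assume a: "a \<noteq> 0" and ind: "\<forall>c d. c \<in> Fq \<and> d \<in> Fq \<and> c * x + d * y = 0 \<longrightarrow> c = 0 \<and> d = 0"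
    and cd: "c \<in> Fq \<and> d \<in> Fq \<and> c * (a * x) + d * (a * y) = 0"
  have "a * (c * x + d * y) = 0" using cd by (simp add: algebra_simps)
  hence "c * x + d * y = 0" using a by simp
  thus "c = 0 \<and> d = 0" using ind cd by blast
qed

lemma mem_scale_div: "x \<in> (\<lambda>z. \<alpha> * z) ` U \<Longrightarrow> inverse \<beta> * x \<in> (\<lambda>z. (\<alpha> / \<beta>) * z) ` (U::'a set)"
proof -
  assume "x \<in> (\<lambda>z. \<alpha> * z) ` U"
  then obtain u where u: "u \<in> U" "x = \<alpha> * u" by blast
  have "inverse \<beta> * x = (\<alpha> / \<beta>) * u" unfolding u(2) by (simp add: divide_inverse mult.left_commute mult.assoc)
  thus ?thesis using u(1) by blast
qed

lemma mem_scale_inv: "x \<in> (\<lambda>z. \<beta> * z) ` U \<Longrightarrow> \<beta> \<noteq> 0 \<Longrightarrow> inverse \<beta> * x \<in> (U::'a set)"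
proof -
  assume "x \<in> (\<lambda>z. \<beta> * z) ` U" "\<beta> \<noteq> 0"
  then obtain u where u: "u \<in> U" "x = \<beta> * u" by blast
  have "inverse \<beta> * x = u" unfolding u(2) using \<open>\<beta> \<noteq> 0\<close> by (simp add: mult.assoc[symmetric])
  thus ?thesis using u(1) by simp
qed

lemma CC_int:
  assumes U: "U \<in> CC" and V: "V \<in> CC" and ne: "U \<noteq> V"
  shows "card (U \<inter> V) \<le> q"
proof -
  obtain \<tau>1 \<delta>1 l1 \<alpha> where v1: "valid \<tau>1 \<delta>1 l1" "\<alpha> \<noteq> 0" "U = (\<lambda>x. \<alpha> * x) ` U_sub q k \<gamma> \<tau>1 \<delta>1 l1"
    using U by (rule CC_obtain)
  obtain \<tau>2 \<delta>2 l2 \<beta> where v2: "valid \<tau>2 \<delta>2 l2" "\<beta> \<noteq> 0" "V = (\<lambda>x. \<beta> * x) ` U_sub q k \<gamma> \<tau>2 \<delta>2 l2"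
    using V by (rule CC_obtain)
  have S: "fq_subspace q (U \<inter> V)" using CC_sub U V subspace_int by blast
  have "\<forall>x\<in>U \<inter> V. \<forall>y\<in>U \<inter> V. \<not> indep2 x y"
  proof (intro ballI notI)
    fix x y assume x: "x \<in> U \<inter> V" and y: "y \<in> U \<inter> V" and ind: "indep2 x y"
    have ab: "\<alpha> / \<beta> \<noteq> 0" using v1 v2 by simp
    have "\<tau>1 = \<tau>2 \<and> \<delta>1 = \<delta>2 \<and> l1 = l2 \<and> \<alpha> / \<beta> \<in> Fq"
    proof (rule sidon[OF v1(1) v2(1) ab])
      show "inverse \<beta> * x \<in> (\<lambda>x. \<alpha> / \<beta> * x) ` U_sub q k \<gamma> \<tau>1 \<delta>1 l1"
        using x v1(3) mem_scale_div by blast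
      show "inverse \<beta> * y \<in> (\<lambda>x. \<alpha> / \<beta> * x) ` U_sub q k \<gamma> \<tau>1 \<delta>1 l1"
        using y v1(3) mem_scale_div by blast
      show "inverse \<beta> * x \<in> U_sub q k \<gamma> \<tau>2 \<delta>2 l2"
        using x v2(2,3) mem_scale_inv by blast
      show "inverse \<beta> * y \<in> U_sub q k \<gamma> \<tau>2 \<delta>2 l2"
        using y v2(2,3) mem_scale_inv by blast
      show "indep2 (inverse \<beta> * x) (inverse \<beta> * y)" using indep2_scale ind v2(2) by simp
    qed
    hence "U = V" using v1 v2 scale_eq_iff[OF v2(1) v1(2) v2(2)] by simp
    thus False using ne by simp
  qed
  thus ?thesis using small_card[OF S] by blast
qed

lemma CC_dist:
  assumes "U \<in> CC" "V \<in> CC" "U \<noteq> V"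
  shows "subspace_dist q U V \<ge> 2 * int k - 2"
proof -
  have "fq_dim q (U \<inter> V) \<le> 1"
    using dim_le1 CC_int[OF assms] CC_sub assms subspace_int by blast
  thus ?thesis using CC_sub assms by (simp add: subspace_dist_def)
qed

lemma CC_card: "card CC = e * (Q - 1) * (q ^ n - 1)"
proof -
  define Tr where "Tr = T \<times> (K - {0}) \<times> {1..e}"
  define Orb where "Orb = (\<lambda>(\<tau>, \<delta>, l). orbit (U_sub q k \<gamma> \<tau> \<delta> l))"
  have "{orbit (U_sub q k \<gamma> \<tau> \<delta> l) | \<tau> \<delta> l. \<tau> \<in> T \<and> \<delta> \<in> subfld q k - {0} \<and> l \<in> {1..e}} = Orb ` Tr"
  proof
    show "{orbit (U_sub q k \<gamma> \<tau> \<delta> l) | \<tau> \<delta> l. \<tau> \<in> T \<and> \<delta> \<in> subfld q k - {0} \<and> l \<in> {1..e}} \<subseteq> Orb ` Tr"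
    proof
      fix X assume "X \<in> {orbit (U_sub q k \<gamma> \<tau> \<delta> l) | \<tau> \<delta> l. \<tau> \<in> T \<and> \<delta> \<in> subfld q k - {0} \<and> l \<in> {1..e}}"
      then obtain \<tau> \<delta> l where "X = orbit (U_sub q k \<gamma> \<tau> \<delta> l)" "\<tau> \<in> T" "\<delta> \<in> K - {0}" "l \<in> {1..e}" by blast
      hence "X = Orb (\<tau>, \<delta>, l)" "(\<tau>, \<delta>, l) \<in> Tr" by (simp_all add: Orb_def Tr_def)
      thus "X \<in> Orb ` Tr" by blast
    qed
    show "Orb ` Tr \<subseteq> {orbit (U_sub q k \<gamma> \<tau> \<delta> l) | \<tau> \<delta> l. \<tau> \<in> T \<and> \<delta> \<in> subfld q k - {0} \<and> l \<in> {1..e}}"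
    proof
      fix X assume "X \<in> Orb ` Tr"
      then obtain t where t: "t \<in> Tr" "X = Orb t" by blast
      obtain \<tau> \<delta> l where tt: "t = (\<tau>, \<delta>, l)" by (cases t) auto
      have "X = orbit (U_sub q k \<gamma> \<tau> \<delta> l)" "\<tau> \<in> T" "\<delta> \<in> K - {0}" "l \<in> {1..e}"
        using t tt by (simp_all add: Orb_def Tr_def)
      thus "X \<in> {orbit (U_sub q k \<gamma> \<tau> \<delta> l) | \<tau> \<delta> l. \<tau> \<in> T \<and> \<delta> \<in> subfld q k - {0} \<and> l \<in> {1..e}}"
        by blast
    qed
  qed
  hence CCe: "CC = \<Union> (Orb ` Tr)" unfolding CC_def by simp
  have vt: "valid \<tau> \<delta> l" if "(\<tau>, \<delta>, l) \<in> Tr" for \<tau> \<delta> l using that by (simp add: Tr_def valid_def)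
  have disj: "Orb t1 \<inter> Orb t2 = {}" if t: "t1 \<in> Tr" "t2 \<in> Tr" "t1 \<noteq> t2" for t1 t2
  proof (rule ccontr)
    obtain \<tau>1 \<delta>1 l1 \<tau>2 \<delta>2 l2 where tt: "t1 = (\<tau>1, \<delta>1, l1)" "t2 = (\<tau>2, \<delta>2, l2)" by (cases t1, cases t2) auto
    have v1: "valid \<tau>1 \<delta>1 l1" and v2: "valid \<tau>2 \<delta>2 l2" using vt t tt by auto
    assume "Orb t1 \<inter> Orb t2 \<noteq> {}"
    then obtain X where "X \<in> Orb t1" "X \<in> Orb t2" by blast
    then obtain \<alpha> \<beta> where ab: "\<alpha> \<noteq> 0" "\<beta> \<noteq> 0" "X = (\<lambda>x. \<alpha> * x) ` U_sub q k \<gamma> \<tau>1 \<delta>1 l1"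
        "X = (\<lambda>x. \<beta> * x) ` U_sub q k \<gamma> \<tau>2 \<delta>2 l2"
      unfolding Orb_def tt orbit_def by auto
    have "(\<lambda>x. inverse \<beta> * x) ` ((\<lambda>x. \<alpha> * x) ` U_sub q k \<gamma> \<tau>1 \<delta>1 l1) =
        (\<lambda>x. inverse \<beta> * x) ` ((\<lambda>x. \<beta> * x) ` U_sub q k \<gamma> \<tau>2 \<delta>2 l2)" using ab by simp
    hence "(\<lambda>x. (inverse \<beta> * \<alpha>) * x) ` U_sub q k \<gamma> \<tau>1 \<delta>1 l1 = U_sub q k \<gamma> \<tau>2 \<delta>2 l2"
      unfolding scale_scale using ab by simp
    moreover have "inverse \<beta> * \<alpha> \<noteq> 0" using ab by simp
    ultimately have "\<tau>1 = \<tau>2 \<and> \<delta>1 = \<delta>2 \<and> l1 = l2" using orbit_eq[OF v1 v2, of "inverse \<beta> * \<alpha>"] by blast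
    thus False using t tt by simp
  qed
  define M where "M = (q ^ n - 1) div (q - 1)"
  have cO: "card (Orb t) = M" if "t \<in> Tr" for t
  proof -
    obtain \<tau> \<delta> l where tt: "t = (\<tau>, \<delta>, l)" by (cases t) auto
    have e: "card (Orb t) * (q - 1) = q ^ n - 1" using orbit_card vt that tt by (simp add: Orb_def)
    have "q - 1 \<noteq> 0" using q2 by simp
    hence "(card (Orb t) * (q - 1)) div (q - 1) = card (Orb t)" by (rule nonzero_mult_div_cancel_right)
    thus ?thesis unfolding M_def e by (rule sym)
  qed
  have "card CC = (\<Sum>t\<in>Tr. card (Orb t))"
    unfolding CCe by (rule card_UN_disjoint) (use disj in \<open>auto simp: Tr_def\<close>)
  also have "\<dots> = card Tr * M" using cO by simp
  also have "card Tr = (q - 1) * (Q - 1) * e"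
    using card_T card_K sf_0 by (simp add: Tr_def card_cartesian_product)
  finally have "card CC = (q - 1) * M * (e * (Q - 1))" by (simp add: mult_ac)
  moreover have "(q - 1) * M = q ^ n - 1" using dvd_pow_minus_one[of q n] qpos by (simp add: M_def)
  ultimately show ?thesis by (simp add: mult_ac)
qed


lemma CC_exact: "\<exists>U\<in>CC. \<exists>V\<in>CC. U \<noteq> V \<and> subspace_dist q U V = 2 * int k - 2"
proof -
  have "(1::'a) \<in> K - {0}" using sf_1 by simp
  then obtain \<tau> where \<tau>T: "\<tau> \<in> T" using T_rep by blast
  have \<tau>K: "\<tau> \<in> K" "\<tau> \<noteq> 0" using \<tau>T T_sub by auto
  define Z where "Z = {u::'a. \<tau> * u ^ q + 1 * u = 0}"
  have cZ: "card Z \<le> q" unfolding Z_def using roots_bound[OF \<tau>K(2)] q2 by blast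
  have Z0: "0 \<in> Z" using qpos by (simp add: Z_def)
  have "\<not> K \<subseteq> Z"
  proof
    assume "K \<subseteq> Z"
    hence "card K \<le> card Z" by (intro card_mono) auto
    thus False using card_K cZ Q_gt_q by simp
  qed
  then obtain u0 where u0: "u0 \<in> K" "u0 \<notin> Z" by blast
  have u00: "u0 \<noteq> 0" using u0 Z0 by auto
  define Y where "Y = {a::'a. a * u0 \<in> Z}"
  have cY: "card Y \<le> q"
  proof -
    have "inj_on (\<lambda>a. a * u0) Y" using u00 by (auto intro: inj_onI)
    moreover have "(\<lambda>a. a * u0) ` Y \<subseteq> Z" by (auto simp: Y_def)
    ultimately have "card Y \<le> card Z" by (intro card_inj_on_le) auto
    thus ?thesis using cZ by simp
  qed
  have Y0: "0 \<in> Y" using Z0 by (simp add: Y_def)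
  have "card (Fq \<union> Y) + card (Fq \<inter> Y) = card Fq + card Y" using card_Un_Int[of Fq Y] by simp
  moreover have "card (Fq \<inter> Y) \<ge> 1" using Y0 sf_0[of 1] by (auto simp: Suc_le_eq card_gt_0_iff)
  ultimately have "card (Fq \<union> Y) < 2 * q" using card_Fq cY by simp
  moreover have "2 * q \<le> Q" using Q_ge q2 by (meson le_trans mult_le_mono1)
  ultimately have "\<not> K \<subseteq> Fq \<union> Y"
    using card_mono[of "Fq \<union> Y" K] card_K by auto
  then obtain \<alpha> where \<alpha>: "\<alpha> \<in> K" "\<alpha> \<notin> Fq" "\<alpha> \<notin> Y" by blast
  have \<alpha>0: "\<alpha> \<noteq> 0" using \<alpha> sf_0[of 1] by auto
  define s0 where "s0 = \<tau> * u0 ^ q + u0"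
  define s1 where "s1 = \<tau> * (\<alpha> * u0) ^ q + \<alpha> * u0"
  have s00: "s0 \<noteq> 0" using u0 by (simp add: Z_def s0_def)
  have s10: "s1 \<noteq> 0" using \<alpha> by (simp add: Y_def Z_def s1_def)
  have sK: "s0 \<in> K" "s1 \<in> K" unfolding s0_def s1_def using \<tau>K u0 \<alpha>
    by (auto intro!: sf_add sf_mult sf_pow)
  define \<delta> where "\<delta> = \<alpha> * s0 / s1"
  have \<delta>K: "\<delta> \<in> K - {0}" using sK \<alpha> \<alpha>0 s00 s10 by (auto simp: \<delta>_def intro!: sf_div sf_mult)
  have sd: "s1 * \<delta> = \<alpha> * s0" using s10 by (simp add: \<delta>_def)
  have e1: "(1::nat) \<in> {1..e}" using e_props by simp
  have va: "valid \<tau> 1 1" using \<tau>T e1 sf_1 by (simp add: valid_def)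
  have vb: "valid \<tau> \<delta> 1" using \<tau>T e1 \<delta>K by (simp add: valid_def)
  define U where "U = (\<lambda>x. \<alpha> * x) ` U_sub q k \<gamma> \<tau> 1 1"
  define V where "V = U_sub q k \<gamma> \<tau> \<delta> 1"
  have UC: "U \<in> CC" unfolding U_def CC_mem using va \<alpha>0 by blast
  have "V = (\<lambda>x. 1 * x) ` U_sub q k \<gamma> \<tau> \<delta> 1" by (simp add: V_def)
  hence VC: "V \<in> CC" unfolding CC_mem using vb by (metis one_neq_zero)
  have UV: "U \<noteq> V"
  proof
    assume "U = V"
    hence "\<alpha> \<in> Fq" using orbit_eq[OF va vb \<alpha>0] by (simp add: U_def V_def)
    thus False using \<alpha> by simp
  qed
  have key: "phi \<tau> \<delta> 1 (\<alpha> * u0) = \<alpha> * phi \<tau> 1 1 u0"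
  proof -
    have "phi \<tau> \<delta> 1 (\<alpha> * u0) = \<alpha> * u0 + (s1 * \<delta>) * \<gamma>"
      unfolding phi_def s1_def by simp
    also have "\<dots> = \<alpha> * u0 + (\<alpha> * s0) * \<gamma>" using sd by simp
    also have "\<dots> = \<alpha> * phi \<tau> 1 1 u0" unfolding phi_def s0_def by (simp add: algebra_simps)
    finally show ?thesis .
  qed
  define w where "w = \<alpha> * phi \<tau> 1 1 u0"
  have w0: "w \<noteq> 0" using phi_zero[OF va u0(1)] u00 \<alpha>0 by (auto simp: w_def)
  have line: "(\<lambda>c. c * w) ` Fq \<subseteq> U \<inter> V"
  proof
    fix x assume "x \<in> (\<lambda>c. c * w) ` Fq"
    then obtain c where c: "c \<in> Fq" "x = c * w" by blast
    have cK: "c \<in> K" using c Fq_sub_K by blast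
    have "x = \<alpha> * phi \<tau> 1 1 (c * u0)" using c phi_smul[OF c(1), of \<tau> 1 1 u0]
      by (simp add: w_def mult.left_commute)
    moreover have "c * u0 \<in> K" using cK u0 by (intro sf_mult)
    ultimately have xU: "x \<in> U" unfolding U_def using phi_in_U by blast
    have "x = phi \<tau> \<delta> 1 (c * (\<alpha> * u0))" using c phi_smul[OF c(1), of \<tau> \<delta> 1 "\<alpha> * u0"] key
      by (simp add: w_def)
    moreover have "c * (\<alpha> * u0) \<in> K" using cK u0 \<alpha> by (intro sf_mult)
    ultimately have xV: "x \<in> V" unfolding V_def using phi_in_U by blast
    show "x \<in> U \<inter> V" using xU xV by blast
  qed
  have "q \<le> card (U \<inter> V)" using card_mono[OF _ line] line_card[OF w0] by simp
  moreover have "card (U \<inter> V) \<le> q" using CC_int[OF UC VC UV] .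
  ultimately have cUV: "card (U \<inter> V) = q ^ 1" by simp
  have S: "fq_subspace q (U \<inter> V)" using CC_sub UC VC subspace_int by blast
  have "fq_dim q (U \<inter> V) = 1" using dim_eq[OF S cUV] .
  hence "subspace_dist q U V = 2 * int k - 2" using CC_sub UC VC by (simp add: subspace_dist_def)
  thus ?thesis using UC VC UV by blast
qed

end

theorem lemma3p1:
  fixes q k r n e :: nat and \<xi> \<gamma> :: "'a::{field,finite}" and T :: "'a set"
  assumes q_pp: "\<exists>p m. prime p \<and> m > 0 \<and> q = p ^ m"
    and k2: "k \<ge> 2" and r2: "r > 2" and n_def: "n = r * k"
    and card_F: "card (UNIV :: 'a set) = q ^ n"
    and e_def: "e = nat \<lceil>real r / 2\<rceil> - 1"
    and xi_prim: "\<xi> \<in> subfld q k" "\<xi> \<noteq> 0"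
        "\<forall>j. 0 < j \<and> j < q ^ k - 1 \<longrightarrow> \<xi> ^ j \<noteq> 1"
    and T_reps: "T \<subseteq> subfld q k - {0}"
        "\<forall>x \<in> subfld q k - {0}. \<exists>!\<tau>. \<tau> \<in> T \<and> (\<exists>j::nat. x = \<tau> * (\<xi> ^ (q - 1)) ^ j)"
    and gamma: "\<exists>f. irreducible_over (subfld q k) f \<and> degree f = r \<and> poly f \<gamma> = 0"
  defines "C \<equiv> \<Union>{orbit (U_sub q k \<gamma> \<tau> \<delta> l) | \<tau> \<delta> l.
                      \<tau> \<in> T \<and> \<delta> \<in> subfld q k - {0} \<and> l \<in> {1..e}}"
  shows "(\<forall>U\<in>C. fq_subspace q U \<and> fq_dim q U = k)
         \<and> (\<forall>U\<in>C. \<forall>\<alpha>. \<alpha> \<noteq> 0 \<longrightarrow> (\<lambda>x. \<alpha> * x) ` U \<in> C)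
         \<and> card C = e * (q ^ k - 1) * (q ^ n - 1)
         \<and> (\<forall>U\<in>C. \<forall>V\<in>C. U \<noteq> V \<longrightarrow> subspace_dist q U V \<ge> 2 * int k - 2)
         \<and> (\<exists>U\<in>C. \<exists>V\<in>C. U \<noteq> V \<and> subspace_dist q U V = 2 * int k - 2)"
proof -
  obtain p m where pm: "prime p" "m > 0" "q = p ^ m" using q_pp by blast
  interpret L: L q k r n e p m \<xi> \<gamma> T
    by (rule L.intro) (fact pm(1), fact pm(2), fact pm(3), fact k2, fact r2, fact n_def, fact card_F,
        fact e_def, fact xi_prim(1), fact xi_prim(2), fact xi_prim(3), fact T_reps(1), fact T_reps(2), fact gamma)
  have C: "C = L.CC" unfolding C_def L.CC_def ..
  show ?thesis unfolding C
  proof (intro conjI ballI allI impI)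
    fix U assume "U \<in> L.CC"
    thus "fq_subspace q U" "fq_dim q U = k" using L.CC_sub by auto
  next
    fix U and \<alpha> :: 'a assume "U \<in> L.CC" "\<alpha> \<noteq> 0"
    thus "(\<lambda>x. \<alpha> * x) ` U \<in> L.CC" by (rule L.CC_cyc)
  next
    show "card L.CC = e * (q ^ k - 1) * (q ^ n - 1)" by (rule L.CC_card)
  next
    fix U V assume "U \<in> L.CC" "V \<in> L.CC" "U \<noteq> V"
    thus "2 * int k - 2 \<le> subspace_dist q U V" by (rule L.CC_dist)
  next
    show "\<exists>U\<in>L.CC. \<exists>V\<in>L.CC. U \<noteq> V \<and> subspace_dist q U V = 2 * int k - 2" by (rule L.CC_exact)
  qed
qed

end
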